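(* Let $d\ge1$, $\alpha\in(0,2)$, and let $D\subset\mathbb{R}^d$ be a Borel set. For every $\gamma\in[0,\alpha)$ there exists a constant $C_3=C_3(d,\alpha,\gamma)>0$ such that for every (nonnegative) measure $\mu$ on $D$ and every $(t,x,y)\in(0,\infty)\times D\times D$, $$\int_0^t\int_D\psi_\gamma(t-s,x,z)\psi_\gamma(s,z,y)q(t-s,x,z)q(s,z,y)\,\mu(dz)\,ds\le C_3\,\psi_\gamma(t,x,y)q(t,x,y)\sup_{u\in D}\int_0^t\int_D\Big(1\wedge\frac{\delta_D(z)}{s^{1/\alpha}}\Big)^\gamma q(s,u,z)\,\mu(dz)\,ds.$$
   Context: $\delta_D(x)$ is the Euclidean distance from $x$ to $D^c$; $q(t,x,y):=t^{-d/\alpha}\wedge\frac{t}{|x-y|^{d+\alpha}}$; $\psi_\gamma(t,x,y):=\big(1\wedge\frac{\delta_D(x)}{t^{1/\alpha}}\big)^\gamma\big(1\wedge\frac{\delta_D(y)}{t^{1/\alpha}}\big)^\gamma$. *)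

theory Defs
  imports "HOL-Analysis.Analysis"
begin

definition bfac :: "real \<Rightarrow> 'a::euclidean_space set \<Rightarrow> real \<Rightarrow> 'a \<Rightarrow> real" where
  "bfac \<alpha> D t x = (if - D = {} then 1 else min 1 (infdist x (- D) / t powr (1 / \<alpha>)))"

text \<open>Power with the convention 0^0 = 1.\<close>
definition pw :: "real \<Rightarrow> real \<Rightarrow> real" where
  "pw a g = (if g = 0 then 1 else a powr g)"

definition psi :: "real \<Rightarrow> real \<Rightarrow> 'a::euclidean_space set \<Rightarrow> real \<Rightarrow> 'a \<Rightarrow> 'a \<Rightarrow> real" where
  "psi \<alpha> \<gamma> D t x y = pw (bfac \<alpha> D t x) \<gamma> * pw (bfac \<alpha> D t y) \<gamma>"

text \<open>q(t,x,y) = t^(-d/alpha) min t/|x-y|^(d+alpha), with t/0 = infinity.\<close>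
definition q :: "real \<Rightarrow> real \<Rightarrow> 'a::euclidean_space \<Rightarrow> 'a \<Rightarrow> real" where
  "q \<alpha> t x y = (if x = y then t powr (- real DIM('a) / \<alpha>)
     else min (t powr (- real DIM('a) / \<alpha>)) (t / dist x y powr (real DIM('a) + \<alpha>)))"

end

theory Submission
  imports Defs
begin


lemma aux_scale:
  fixes d A T :: real
  assumes "0 \<le> d" "0 < A" "A \<le> T"
  shows "min 1 (d / A) \<le> (T / A) * min 1 (d / T)"
proof (cases "d \<le> T")
  case True
  then have "min 1 (d/T) = d/T" using assms by (auto simp: min_def field_simps)
  moreover have "(T/A) * (d/T) = d/A" using assms by (simp add: field_simps)
  ultimately show ?thesis by simp
next
  case False
  then have "min 1 (d/T) = 1" using assms by (simp add: min_def field_simps)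
  moreover have "1 \<le> T/A" using assms by simp
  ultimately show ?thesis by simp
qed

lemma aux_tri:
  fixes dx dz r A T :: real
  assumes "0 \<le> dx" "0 \<le> dz" "0 \<le> r" "0 < A" "A \<le> T" "dz \<le> dx + r"
  shows "min 1 (dx / A) * min 1 (dz / T) \<le> min 1 (dx / T) * (1 + r / A)"
proof (cases "dx \<le> A")
  case True
  have T0: "0 < T" using assms by simp
  have "min 1 (dz / T) \<le> (dx + r) / T"
    using assms T0 by (simp add: min.coboundedI2 divide_right_mono)
  then have "min 1 (dx / A) * min 1 (dz / T) \<le> (dx / A) * ((dx + r) / T)"
    by (intro mult_mono) (use assms T0 in \<open>auto\<close>)
  also have "\<dots> = (dx / T) * (dx / A + r / A)" using assms by (simp add: field_simps)
  also have "\<dots> \<le> (dx / T) * (1 + r / A)"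
    by (intro mult_left_mono) (use True assms T0 in auto)
  also have "dx / T = min 1 (dx / T)" using True assms by (simp add: min_def)
  finally show ?thesis .
next
  case False
  show ?thesis
  proof (cases "dx \<le> T")
    case False
    then have "min 1 (dx/T) = 1" using assms by (simp add: min_def field_simps)
    moreover have "min 1 (dx / A) * min 1 (dz / T) \<le> 1"
      by (intro mult_le_one) (use assms in auto)
    moreover have "0 \<le> r / A" using assms by simp
    ultimately show ?thesis by simp
  next
    case True
    have T0: "0 < T" using assms by simp
    have "min 1 (dz / T) \<le> (dx + r) / T"
      using assms T0 by (simp add: min.coboundedI2 divide_right_mono)
    then have "min 1 (dx / A) * min 1 (dz / T) \<le> 1 * ((dx + r) / T)"
      by (intro mult_mono) (use assms T0 in \<open>auto\<close>)
    also have "\<dots> = dx / T + (dx/T) * (r / dx)" using assms False by (simp add: field_simps)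
    also have "\<dots> \<le> dx / T + (dx/T) * (r / A)"
      using False assms T0 by (intro add_left_mono mult_left_mono divide_left_mono) auto
    also have "\<dots> = min 1 (dx / T) * (1 + r / A)" using True T0 by (simp add: min_def field_simps)
    finally show ?thesis by simp
  qed
qed

context fixes \<alpha> :: real assumes a0: "0 < \<alpha>" begin

lemma bfac_nonneg: "0 \<le> t \<Longrightarrow> 0 \<le> bfac \<alpha> D t x"
  unfolding bfac_def by (auto simp: infdist_nonneg)
lemma bfac_le1: "bfac \<alpha> D t x \<le> 1"
  unfolding bfac_def by auto

lemma bfac_anti: assumes "0 < a" "a \<le> t" shows "bfac \<alpha> D t w \<le> bfac \<alpha> D a w"
proof -
  have "a powr (1/\<alpha>) \<le> t powr (1/\<alpha>)" using assms a0 by (intro powr_mono2) auto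
  moreover have "0 < a powr (1/\<alpha>)" using assms by simp
  ultimately have "infdist w (-D) / t powr (1/\<alpha>) \<le> infdist w (-D) / a powr (1/\<alpha>)"
    using assms by (intro divide_left_mono) (auto simp: infdist_nonneg intro!: mult_pos_pos)
  then show ?thesis unfolding bfac_def using min.mono[OF order_refl, of _ _ 1] by auto
qed

lemma bfac_scale: assumes "0 < a" "a \<le> t"
  shows "bfac \<alpha> D a w \<le> (t/a) powr (1/\<alpha>) * bfac \<alpha> D t w"
proof -
  have "1 \<le> (t/a) powr (1/\<alpha>)" using assms a0 by (intro ge_one_powr_ge_zero) auto
  moreover have "(t/a) powr (1/\<alpha>) = t powr (1/\<alpha>) / a powr (1/\<alpha>)"
    using assms by (simp add: powr_divide)
  moreover have "a powr (1/\<alpha>) \<le> t powr (1/\<alpha>)" using assms a0 by (intro powr_mono2) auto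
  moreover have "0 < a powr (1/\<alpha>)" using assms by simp
  ultimately have "min 1 (infdist w (-D) / a powr (1/\<alpha>)) \<le> (t/a) powr (1/\<alpha>) * min 1 (infdist w (-D) / t powr (1/\<alpha>))"
    using aux_scale[of "infdist w (-D)" "a powr (1/\<alpha>)" "t powr (1/\<alpha>)"] by (simp add: infdist_nonneg)
  then show ?thesis unfolding bfac_def using \<open>1 \<le> (t/a) powr (1/\<alpha>)\<close> by auto
qed

lemma bfac_tri: assumes "0 < a" "a \<le> t"
  shows "bfac \<alpha> D a x * bfac \<alpha> D t z \<le> bfac \<alpha> D t x * (1 + dist x z / a powr (1/\<alpha>))"
proof (cases "- D = {}")
  case True
  then show ?thesis using assms unfolding bfac_def by auto
next
  case False
  have "infdist z (-D) \<le> infdist x (-D) + dist x z"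
    using infdist_triangle[of z "-D" x] by (simp add: dist_commute)
  moreover have "a powr (1/\<alpha>) \<le> t powr (1/\<alpha>)" using assms a0 by (intro powr_mono2) auto
  ultimately show ?thesis unfolding bfac_def using False assms
    by (auto intro!: aux_tri infdist_nonneg)
qed

end

lemma pw_nonneg: "0 \<le> pw a g" unfolding pw_def by auto
lemma pw_le1: "0 \<le> a \<Longrightarrow> a \<le> 1 \<Longrightarrow> 0 \<le> g \<Longrightarrow> pw a g \<le> 1"
  unfolding pw_def by (auto intro: powr_le1)
lemma pw_mono: "0 \<le> a \<Longrightarrow> a \<le> b \<Longrightarrow> 0 \<le> g \<Longrightarrow> pw a g \<le> pw b g"
  unfolding pw_def by (auto intro: powr_mono2)
lemma pw_mult: "0 \<le> a \<Longrightarrow> 0 \<le> b \<Longrightarrow> pw (a * b) g = pw a g * pw b g"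
  unfolding pw_def by (auto simp: powr_mult)
lemma pw_pos: "0 < a \<Longrightarrow> pw a g = a powr g"
  unfolding pw_def by auto
lemma pw_ge1: "1 \<le> a \<Longrightarrow> 0 \<le> g \<Longrightarrow> 1 \<le> pw a g"
  unfolding pw_def by (auto intro: ge_one_powr_ge_zero)

lemma q_sym: "q \<alpha> t x y = q \<alpha> t y x"
  unfolding q_def by (auto simp: dist_commute)

lemma q_pos: "0 < t \<Longrightarrow> 0 < q \<alpha> t x y"
  unfolding q_def by auto

lemma q_le_diag: "q \<alpha> t x y \<le> t powr (- real DIM('a::euclidean_space) / \<alpha>)"
  for x y :: "'a::euclidean_space"
  unfolding q_def by auto

lemma q_le_far: "x \<noteq> y \<Longrightarrow> q \<alpha> t x y \<le> t / dist x y powr (real DIM('a::euclidean_space) + \<alpha>)"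
  for x y :: "'a::euclidean_space"
  unfolding q_def by auto

lemma q_neq: "x \<noteq> y \<Longrightarrow> q \<alpha> t x y = min (t powr (- real DIM('a::euclidean_space) / \<alpha>))
     (t / dist x y powr (real DIM('a) + \<alpha>))"
  for x y :: "'a::euclidean_space"
  unfolding q_def by auto

lemma q_eq: "q \<alpha> t x x = t powr (- real DIM('a::euclidean_space) / \<alpha>)"
  for x :: "'a::euclidean_space"
  unfolding q_def by auto

lemma q_le_half: fixes x y :: "'a::euclidean_space" assumes "0 < \<alpha>" "0 < t" "t/2 \<le> s"
  shows "q \<alpha> s x y \<le> 2 powr (real DIM('a::euclidean_space) / \<alpha>) * t powr (- real DIM('a) / \<alpha>)"
proof -
  have "q \<alpha> s x y \<le> s powr (- real DIM('a) / \<alpha>)" by (rule q_le_diag)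
  also have "\<dots> \<le> (t/2) powr (- real DIM('a) / \<alpha>)"
    using assms by (intro powr_mono2') auto
  also have "\<dots> = 2 powr (real DIM('a) / \<alpha>) * t powr (- real DIM('a) / \<alpha>)"
    using assms by (simp add: powr_divide powr_minus_divide divide_simps)
  finally show ?thesis .
qed




definition Wf :: "real \<Rightarrow> real \<Rightarrow> real \<Rightarrow> 'a::euclidean_space \<Rightarrow> 'a \<Rightarrow> real" where
  "Wf \<alpha> t a x z = min ((t/a) powr (1/\<alpha>)) (1 + dist x z / a powr (1/\<alpha>))"

definition fA :: "real \<Rightarrow> real \<Rightarrow> 'a::euclidean_space set \<Rightarrow> 'a \<Rightarrow> real \<Rightarrow> 'a \<Rightarrow> real" where
  "fA \<alpha> \<gamma> D u a z = pw (bfac \<alpha> D a z) \<gamma> * q \<alpha> a u z"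

definition Aw :: "real \<Rightarrow> real \<Rightarrow> 'a::euclidean_space set \<Rightarrow> real \<Rightarrow> 'a \<Rightarrow> real \<Rightarrow> 'a \<Rightarrow> real" where
  "Aw \<alpha> \<gamma> D t u a z = indicator {0<..t/2} a * pw (Wf \<alpha> t a u z) \<gamma> * fA \<alpha> \<gamma> D u a z"

definition KA :: "real \<Rightarrow> real \<Rightarrow> nat \<Rightarrow> real" where
  "KA \<alpha> \<gamma> n = pw (2 powr (1/\<alpha>)) \<gamma> * pw (2 powr (1/\<alpha>)) \<gamma> * (2 powr (real n / \<alpha>) + 2 powr (real n + \<alpha>))
     + 2 powr (real n + \<alpha>) * pw (2 powr (1/\<alpha>)) \<gamma>"

lemma mono4: "(0::real) \<le> a \<Longrightarrow> a \<le> a' \<Longrightarrow> 0 \<le> b \<Longrightarrow> b \<le> b' \<Longrightarrow> 0 \<le> c \<Longrightarrow> c \<le> c' \<Longrightarrow> a*b*c \<le> a'*b'*c'"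
  by (meson mult_mono mult_nonneg_nonneg order_trans)

lemma pw_powr_le: assumes "1 \<le> X" "0 \<le> \<gamma>" "\<gamma> \<le> \<alpha>" "0 < \<alpha>"
  shows "pw (X powr (1/\<alpha>)) \<gamma> \<le> X"
proof -
  have "pw (X powr (1/\<alpha>)) \<gamma> = X powr (\<gamma>/\<alpha>)" using assms by (simp add: pw_pos powr_powr)
  also have "\<dots> \<le> X powr 1" using assms by (intro powr_mono) auto
  finally show ?thesis using assms by simp
qed

lemma lemA:
  fixes x y z :: "'a::euclidean_space"
  assumes a0: "0 < \<alpha>" and g0: "0 \<le> \<gamma>" and ga: "\<gamma> \<le> \<alpha>" and t0: "0 < t" and st: "t/2 \<le> s" "s < t"
  shows "psi \<alpha> \<gamma> D (t-s) x z * psi \<alpha> \<gamma> D s z y * q \<alpha> (t-s) x z * q \<alpha> s z y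
     \<le> KA \<alpha> \<gamma> DIM('a) * (psi \<alpha> \<gamma> D t x y * q \<alpha> t x y) * (Aw \<alpha> \<gamma> D t x (t-s) z + fA \<alpha> \<gamma> D y s z)"
proof -
  define a where "a = t - s"
  have a: "0 < a" "a \<le> t/2" "a \<le> s" "s \<le> t" "0 < s" using st t0 by (auto simp: a_def)
  define d where "d = real DIM('a)"
  define cb where "cb = 2 powr (1/\<alpha>)"
  define E where "E = pw cb \<gamma>"
  define K1 where "K1 = 2 powr (d / \<alpha>) + 2 powr (d + \<alpha>)"
  have KA: "KA \<alpha> \<gamma> DIM('a) = E * E * K1 + 2 powr (d + \<alpha>) * E"
    unfolding KA_def E_def cb_def K1_def d_def ..
  define bx where "bx = bfac \<alpha> D a x"
  define bz where "bz = bfac \<alpha> D a z"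
  define cz where "cz = bfac \<alpha> D s z"
  define cy where "cy = bfac \<alpha> D s y"
  define Tx where "Tx = bfac \<alpha> D t x"
  define Ty where "Ty = bfac \<alpha> D t y"
  define Q where "Q = q \<alpha> t x y"
  define qa where "qa = q \<alpha> a x z"
  define qs where "qs = q \<alpha> s z y"
  define W where "W = Wf \<alpha> t a x z"
  have nn: "0 \<le> bx" "0 \<le> bz" "0 \<le> cz" "0 \<le> cy" "0 \<le> Tx" "0 \<le> Ty"
    unfolding bx_def bz_def cz_def cy_def Tx_def Ty_def using a t0 by (auto intro!: bfac_nonneg a0)
  have qpos: "0 < Q" "0 < qa" "0 < qs" unfolding Q_def qa_def qs_def using a t0 by (auto intro!: q_pos)
  have cb1: "1 \<le> cb" unfolding cb_def using a0 by (intro ge_one_powr_ge_zero) auto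
  have E0: "0 \<le> E" unfolding E_def by (rule pw_nonneg)
  have K10: "0 \<le> K1" unfolding K1_def by simp
  have LHS: "psi \<alpha> \<gamma> D (t-s) x z * psi \<alpha> \<gamma> D s z y * q \<alpha> (t-s) x z * q \<alpha> s z y
      = pw bx \<gamma> * pw bz \<gamma> * pw cz \<gamma> * pw cy \<gamma> * qa * qs"
    unfolding psi_def bx_def bz_def cz_def cy_def qa_def qs_def a_def by (simp add: mult_ac)
  have Phi: "psi \<alpha> \<gamma> D t x y * q \<alpha> t x y = pw Tx \<gamma> * pw Ty \<gamma> * Q"
    unfolding psi_def Tx_def Ty_def Q_def ..
  have Awe: "Aw \<alpha> \<gamma> D t x (t-s) z = pw W \<gamma> * pw bz \<gamma> * qa"
    unfolding Aw_def fA_def W_def bz_def qa_def a_def[symmetric] using a by (simp add: indicator_def)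
  have fAe: "fA \<alpha> \<gamma> D y s z = pw cz \<gamma> * qs"
    unfolding fA_def cz_def qs_def by (simp add: q_sym)
  have Aw0: "0 \<le> pw W \<gamma> * pw bz \<gamma> * qa" using qpos by (simp add: pw_nonneg)
  have fA0: "0 \<le> pw cz \<gamma> * qs" using qpos by (simp add: pw_nonneg)
  have Phi0: "0 \<le> pw Tx \<gamma> * pw Ty \<gamma> * Q" using qpos by (simp add: pw_nonneg)
  have ts2: "(t/s) powr (1/\<alpha>) \<le> cb" unfolding cb_def using a a0 st by (intro powr_mono2) (auto simp: field_simps)
  have cyb: "cy \<le> cb * Ty"
  proof -
    have "cy \<le> (t/s) powr (1/\<alpha>) * Ty" unfolding cy_def Ty_def using a by (intro bfac_scale a0) auto
    also have "\<dots> \<le> cb * Ty" using ts2 nn by (intro mult_right_mono) auto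
    finally show ?thesis .
  qed
  have pcy: "pw cy \<gamma> \<le> E * pw Ty \<gamma>"
    unfolding E_def using pw_mono[OF nn(4) cyb g0] pw_mult[of cb Ty \<gamma>] cb1 nn by auto
  have czb: "cz \<le> cb * bfac \<alpha> D t z"
  proof -
    have "cz \<le> (t/s) powr (1/\<alpha>) * bfac \<alpha> D t z" unfolding cz_def using a by (intro bfac_scale a0) auto
    also have "\<dots> \<le> cb * bfac \<alpha> D t z" using ts2 a t0 by (intro mult_right_mono bfac_nonneg a0) auto
    finally show ?thesis .
  qed
  show ?thesis
  proof (cases "qs \<le> K1 * Q")
    case True
    have h1: "bx * cz \<le> cb * Tx * W"
    proof -
      have "bx * cz \<le> bx * (cb * bfac \<alpha> D t z)" using czb nn by (intro mult_left_mono) auto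
      also have "\<dots> = cb * (bx * bfac \<alpha> D t z)" by simp
      also have "\<dots> \<le> cb * (Tx * (1 + dist x z / a powr (1/\<alpha>)))"
        unfolding bx_def Tx_def using cb1 a by (intro mult_left_mono bfac_tri a0) auto
      finally have 1: "bx * cz \<le> cb * Tx * (1 + dist x z / a powr (1/\<alpha>))" by simp
      have "bx * cz \<le> bx" using nn bfac_le1[OF a0, of D s z] unfolding cz_def by (simp add: mult_left_le)
      also have "\<dots> \<le> (t/a) powr (1/\<alpha>) * Tx" unfolding bx_def Tx_def using a by (intro bfac_scale a0) auto
      also have "\<dots> \<le> cb * Tx * (t/a) powr (1/\<alpha>)"
      proof -
        have "(t/a) powr (1/\<alpha>) \<le> cb * (t/a) powr (1/\<alpha>)" using cb1 by (simp add: mult_le_cancel_right1)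
        then show ?thesis using nn by (simp add: mult_ac mult_left_mono)
      qed
      finally have 2: "bx * cz \<le> cb * Tx * (t/a) powr (1/\<alpha>)" .
      show ?thesis unfolding W_def Wf_def using 1 2 by (simp add: min_def)
    qed
    have "pw bx \<gamma> * pw cz \<gamma> \<le> E * pw Tx \<gamma> * pw W \<gamma>"
    proof -
      have "pw bx \<gamma> * pw cz \<gamma> = pw (bx * cz) \<gamma>" using nn by (simp add: pw_mult)
      also have "\<dots> \<le> pw (cb * Tx * W) \<gamma>" using h1 nn g0 by (intro pw_mono) auto
      also have "\<dots> = E * pw Tx \<gamma> * pw W \<gamma>"
        unfolding E_def using cb1 nn a t0 unfolding W_def Wf_def
        by (subst pw_mult; simp add: pw_mult)
      finally show ?thesis .
    qed
    then have "pw bx \<gamma> * pw bz \<gamma> * pw cz \<gamma> * pw cy \<gamma> * qa * qs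
       = (pw bx \<gamma> * pw cz \<gamma>) * (pw bz \<gamma> * qa) * (pw cy \<gamma> * qs)" by (simp add: mult_ac)
    also have "\<dots> \<le> (E * pw Tx \<gamma> * pw W \<gamma>) * (pw bz \<gamma> * qa) * (E * pw Ty \<gamma> * (K1 * Q))"
    proof -
      have "pw cy \<gamma> * qs \<le> (E * pw Ty \<gamma>) * (K1 * Q)"
        using pcy True qpos E0 by (intro mult_mono) (auto simp: pw_nonneg)
      then show ?thesis
        using \<open>pw bx \<gamma> * pw cz \<gamma> \<le> E * pw Tx \<gamma> * pw W \<gamma>\<close> qpos
        by (intro mono4) (auto simp: pw_nonneg)
    qed
    also have "\<dots> = (E * E * K1) * (pw Tx \<gamma> * pw Ty \<gamma> * Q) * (pw W \<gamma> * pw bz \<gamma> * qa)"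
      by (simp add: mult_ac)
    also have "\<dots> \<le> KA \<alpha> \<gamma> DIM('a) * (pw Tx \<gamma> * pw Ty \<gamma> * Q) * (pw W \<gamma> * pw bz \<gamma> * qa + pw cz \<gamma> * qs)"
      unfolding KA using Aw0 fA0 Phi0 E0 K10 qpos
      by (intro mono4) (auto simp: pw_nonneg)
    finally show ?thesis unfolding LHS Phi Awe fAe .
  next
    case False
    define \<beta> where "\<beta> = d + \<alpha>"
    have b0: "0 < \<beta>" unfolding \<beta>_def d_def using a0 by simp
    have qsA: "qs \<le> 2 powr (d / \<alpha>) * t powr (- d / \<alpha>)"
      unfolding qs_def d_def using a0 t0 st by (intro q_le_half) auto
    have xy: "x \<noteq> y"
    proof
      assume "x = y"
      then have "Q = t powr (- d / \<alpha>)" unfolding Q_def d_def by (simp add: q_eq)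
      then have "qs \<le> K1 * Q" using qsA unfolding K1_def by (simp add: distrib_right add_increasing2)
      with False show False by simp
    qed
    define dxy where "dxy = dist x y"
    have dxy0: "0 < dxy" using xy unfolding dxy_def by simp
    have QB: "Q = t / dxy powr \<beta>"
    proof (cases "t powr (- d / \<alpha>) \<le> t / dxy powr \<beta>")
      case True
      then have "Q = t powr (- d / \<alpha>)" unfolding Q_def d_def \<beta>_def dxy_def using xy
        by (simp add: q_neq min_def)
      then have "qs \<le> K1 * Q" using qsA unfolding K1_def by (simp add: distrib_right add_increasing2)
      with False show ?thesis by simp
    next
      case False
      then show ?thesis unfolding Q_def d_def \<beta>_def dxy_def using xy
        by (simp add: q_neq min_def)
    qed
    have hB: "t / (dxy/2) powr \<beta> = 2 powr \<beta> * Q"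
      unfolding QB using dxy0 by (simp add: powr_divide field_simps)
    have zy: "dist z y < dxy / 2"
    proof (rule ccontr)
      assume "\<not> dist z y < dxy / 2"
      then have h: "dxy / 2 \<le> dist z y" by simp
      then have "z \<noteq> y" using dxy0 by auto
      have "qs \<le> s / dist z y powr \<beta>" unfolding qs_def \<beta>_def d_def using \<open>z \<noteq> y\<close> by (rule q_le_far)
      also have "\<dots> \<le> t / (dxy/2) powr \<beta>"
        using h dxy0 a b0 by (intro frac_le powr_mono2) auto
      also have "\<dots> = 2 powr \<beta> * Q" by (rule hB)
      also have "\<dots> \<le> K1 * Q" unfolding K1_def \<beta>_def using qpos
        by (simp add: distrib_right add_increasing)
      finally show False using False by simp
    qed
    have r: "dxy / 2 < dist x z"
      using dist_triangle[of x y z] zy unfolding dxy_def by (simp add: dist_commute)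
    then have "x \<noteq> z" using dxy0 by auto
    have ta1: "1 \<le> t / a" using a by simp
    have h2: "pw bx \<gamma> * qa \<le> 2 powr \<beta> * pw Tx \<gamma> * Q"
    proof -
      have "pw bx \<gamma> \<le> pw ((t/a) powr (1/\<alpha>) * Tx) \<gamma>"
        unfolding bx_def Tx_def using a g0 by (intro pw_mono bfac_scale bfac_nonneg a0) auto
      also have "\<dots> = pw ((t/a) powr (1/\<alpha>)) \<gamma> * pw Tx \<gamma>" using nn by (simp add: pw_mult)
      also have "\<dots> \<le> (t/a) * pw Tx \<gamma>"
        using pw_powr_le[OF ta1 g0 ga a0] by (intro mult_right_mono) (auto simp: pw_nonneg)
      finally have 1: "pw bx \<gamma> \<le> (t/a) * pw Tx \<gamma>" .
      have 2: "qa \<le> a / dist x z powr \<beta>" unfolding qa_def \<beta>_def d_def using \<open>x \<noteq> z\<close> by (rule q_le_far)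
      have "pw bx \<gamma> * qa \<le> ((t/a) * pw Tx \<gamma>) * (a / dist x z powr \<beta>)"
        using 1 2 qpos a by (intro mult_mono) (auto simp: pw_nonneg)
      also have "\<dots> = pw Tx \<gamma> * (t / dist x z powr \<beta>)" using a by (simp add: field_simps)
      also have "\<dots> \<le> pw Tx \<gamma> * (t / (dxy/2) powr \<beta>)"
        using r dxy0 a b0 t0 by (intro mult_left_mono frac_le powr_mono2) (auto simp: pw_nonneg)
      finally show ?thesis unfolding hB by (simp add: mult_ac)
    qed
    have pbz: "pw bz \<gamma> \<le> 1" using nn g0 bfac_le1[OF a0] unfolding bz_def by (intro pw_le1) auto
    have "pw bx \<gamma> * pw bz \<gamma> * pw cz \<gamma> * pw cy \<gamma> * qa * qs
       = (pw bx \<gamma> * qa) * (pw bz \<gamma> * pw cy \<gamma>) * (pw cz \<gamma> * qs)" by (simp add: mult_ac)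
    also have "\<dots> \<le> (2 powr \<beta> * pw Tx \<gamma> * Q) * (1 * (E * pw Ty \<gamma>)) * (pw cz \<gamma> * qs)"
    proof -
      have "pw bz \<gamma> * pw cy \<gamma> \<le> 1 * (E * pw Ty \<gamma>)"
        using pbz pcy E0 by (intro mult_mono) (auto simp: pw_nonneg)
      then show ?thesis using h2 qpos fA0 by (intro mono4) (auto simp: pw_nonneg)
    qed
    also have "\<dots> = (2 powr \<beta> * E) * (pw Tx \<gamma> * pw Ty \<gamma> * Q) * (pw cz \<gamma> * qs)"
      by (simp add: mult_ac)
    also have "\<dots> \<le> KA \<alpha> \<gamma> DIM('a) * (pw Tx \<gamma> * pw Ty \<gamma> * Q) * (pw W \<gamma> * pw bz \<gamma> * qa + pw cz \<gamma> * qs)"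
      unfolding KA \<beta>_def using Aw0 fA0 Phi0 E0 K10 qpos
      by (intro mono4) (auto simp: pw_nonneg)
    finally show ?thesis unfolding LHS Phi Awe fAe .
  qed
qed


lemma psi_sym: "psi \<alpha> \<gamma> D t x y = psi \<alpha> \<gamma> D t y x"
  unfolding psi_def by simp

lemma fA_nonneg: "0 < a \<Longrightarrow> 0 \<le> fA \<alpha> \<gamma> D u a z"
  unfolding fA_def using q_pos[of a \<alpha> u z] by (simp add: pw_nonneg)

lemma Aw_nonneg: "0 \<le> Aw \<alpha> \<gamma> D t u a z"
  unfolding Aw_def by (auto simp: indicator_def pw_nonneg intro!: fA_nonneg mult_nonneg_nonneg)

lemma lemPt:
  fixes x y z :: "'a::euclidean_space"
  assumes a0: "0 < \<alpha>" and g0: "0 \<le> \<gamma>" and ga: "\<gamma> \<le> \<alpha>" and t0: "0 < t" and st: "0 < s" "s < t"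
  shows "psi \<alpha> \<gamma> D (t-s) x z * psi \<alpha> \<gamma> D s z y * q \<alpha> (t-s) x z * q \<alpha> s z y
     \<le> KA \<alpha> \<gamma> DIM('a) * (psi \<alpha> \<gamma> D t x y * q \<alpha> t x y) *
        (Aw \<alpha> \<gamma> D t x (t-s) z + fA \<alpha> \<gamma> D y s z + Aw \<alpha> \<gamma> D t y s z + fA \<alpha> \<gamma> D x (t-s) z)"
proof -
  have KA0: "0 \<le> KA \<alpha> \<gamma> DIM('a)" unfolding KA_def by (simp add: pw_nonneg)
  have P0: "0 \<le> psi \<alpha> \<gamma> D t x y * q \<alpha> t x y" unfolding psi_def using q_pos[OF t0, of \<alpha> x y]
    by (simp add: pw_nonneg)
  have n: "0 \<le> Aw \<alpha> \<gamma> D t x (t-s) z" "0 \<le> fA \<alpha> \<gamma> D y s z" "0 \<le> Aw \<alpha> \<gamma> D t y s z" "0 \<le> fA \<alpha> \<gamma> D x (t-s) z"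
    using st by (auto intro!: Aw_nonneg fA_nonneg)
  show ?thesis
  proof (cases "t/2 \<le> s")
    case True
    have "psi \<alpha> \<gamma> D (t-s) x z * psi \<alpha> \<gamma> D s z y * q \<alpha> (t-s) x z * q \<alpha> s z y
     \<le> KA \<alpha> \<gamma> DIM('a) * (psi \<alpha> \<gamma> D t x y * q \<alpha> t x y) * (Aw \<alpha> \<gamma> D t x (t-s) z + fA \<alpha> \<gamma> D y s z)"
      using assms True by (intro lemA) auto
    also have "\<dots> \<le> KA \<alpha> \<gamma> DIM('a) * (psi \<alpha> \<gamma> D t x y * q \<alpha> t x y) *
        (Aw \<alpha> \<gamma> D t x (t-s) z + fA \<alpha> \<gamma> D y s z + Aw \<alpha> \<gamma> D t y s z + fA \<alpha> \<gamma> D x (t-s) z)"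
      using mult_nonneg_nonneg[OF KA0 P0] n by (intro mult_left_mono) auto
    finally show ?thesis .
  next
    case False
    have "psi \<alpha> \<gamma> D (t-(t-s)) y z * psi \<alpha> \<gamma> D (t-s) z x * q \<alpha> (t-(t-s)) y z * q \<alpha> (t-s) z x
     \<le> KA \<alpha> \<gamma> DIM('a) * (psi \<alpha> \<gamma> D t y x * q \<alpha> t y x) * (Aw \<alpha> \<gamma> D t y (t-(t-s)) z + fA \<alpha> \<gamma> D x (t-s) z)"
      using assms False by (intro lemA) auto
    then have "psi \<alpha> \<gamma> D (t-s) x z * psi \<alpha> \<gamma> D s z y * q \<alpha> (t-s) x z * q \<alpha> s z y
     \<le> KA \<alpha> \<gamma> DIM('a) * (psi \<alpha> \<gamma> D t x y * q \<alpha> t x y) * (Aw \<alpha> \<gamma> D t y s z + fA \<alpha> \<gamma> D x (t-s) z)"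
      by (simp add: psi_sym[of _ _ _ _ x y] psi_sym[of _ _ _ _ y z] psi_sym[of _ _ _ _ z x]
          q_sym[of _ _ x y] q_sym[of _ _ y z] q_sym[of _ _ z x] mult_ac)
    also have "\<dots> \<le> KA \<alpha> \<gamma> DIM('a) * (psi \<alpha> \<gamma> D t x y * q \<alpha> t x y) *
        (Aw \<alpha> \<gamma> D t x (t-s) z + fA \<alpha> \<gamma> D y s z + Aw \<alpha> \<gamma> D t y s z + fA \<alpha> \<gamma> D x (t-s) z)"
      using mult_nonneg_nonneg[OF KA0 P0] n by (intro mult_left_mono) auto
    finally show ?thesis .
  qed
qed




definition K0 :: "real \<Rightarrow> real" where "K0 \<alpha> = 2 + 2 powr (1/\<alpha>)"

lemma powr_ident:
  fixes m a e :: real assumes "0 < m" "0 < a"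
  shows "(m/a) powr e * (2*m/a) powr e * a = 2 powr e * m powr (2*e) * a powr (1 - 2*e)"
proof -
  have "(m/a) powr e * (2*m/a) powr e = (m powr e / a powr e) * (2 powr e * m powr e / a powr e)"
    using assms by (simp add: powr_divide powr_mult)
  also have "\<dots> = 2 powr e * (m powr e * m powr e) / (a powr e * a powr e)" by simp
  also have "\<dots> = 2 powr e * m powr (2*e) / a powr (2*e)"
  proof -
    have "m powr (2*e) = m powr e * m powr e" "a powr (2*e) = a powr e * a powr e" unfolding mult_2 by (rule powr_add)+
    then show ?thesis by simp
  qed
  finally have 1: "(m/a) powr e * (2*m/a) powr e = 2 powr e * m powr (2*e) / a powr (2*e)" .
  have 2: "a powr (1 - 2*e) = a / a powr (2*e)" using assms by (simp add: powr_diff)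
  show ?thesis unfolding 1 2 by simp
qed
lemma aux_K: "1 \<le> (X::real) \<Longrightarrow> 0 \<le> c \<Longrightarrow> 1 + X \<le> (2 + c) * X"
proof -
  assume "1 \<le> X" "0 \<le> c"
  then have "0 \<le> c * X" by simp
  moreover have "(2+c)*X = 2*X + c*X" by (simp add: algebra_simps)
  ultimately show ?thesis using \<open>1 \<le> X\<close> by linarith
qed

lemma lemT_pt:
  fixes u z :: "'a::euclidean_space"
  assumes a0: "0 < \<alpha>" and g0: "0 \<le> \<gamma>" and ga: "\<gamma> < \<alpha>" and t0: "0 < t"
    and r0: "0 < dist u z" and mdef: "m = min (dist u z powr \<alpha>) (t/2)" and aa: "0 < a" "a < t"
  shows "Aw \<alpha> \<gamma> D t u a z \<le> pw (K0 \<alpha>) \<gamma> * fA \<alpha> \<gamma> D u a z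
     + indicator {0<..<m} a * (pw (K0 \<alpha>) \<gamma> * 2 powr (\<gamma>/\<alpha>) * pw (bfac \<alpha> D (2*m) z) \<gamma> * m powr (2*(\<gamma>/\<alpha>))
          / dist u z powr (real DIM('a) + \<alpha>) * a powr (1 - 2*(\<gamma>/\<alpha>)))"
  (is "_ \<le> ?F + indicator _ a * ?H")
proof -
  define r where "r = dist u z"
  have r0': "0 < r" using r0 by (simp add: r_def)
  have m0: "0 < m" using mdef r0 t0 by auto
  have m2t: "2*m \<le> t" "m \<le> r powr \<alpha>" using mdef r_def by auto
  have rr: "(r powr \<alpha>) powr (1/\<alpha>) = r" using r0' a0 by (simp add: powr_powr)
  have K01: "1 \<le> K0 \<alpha>" unfolding K0_def by simp
  have F0: "0 \<le> ?F" using aa by (intro mult_nonneg_nonneg pw_nonneg fA_nonneg)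
  have H0: "0 \<le> ?H" by (simp add: pw_nonneg)
  have fA0: "0 \<le> fA \<alpha> \<gamma> D u a z" by (rule fA_nonneg[OF aa(1)])
  have W0: "0 \<le> Wf \<alpha> t a u z" unfolding Wf_def using aa t0 by auto
  show ?thesis
  proof (cases "a \<le> t/2")
    case False
    then have "Aw \<alpha> \<gamma> D t u a z = 0" unfolding Aw_def by simp
    then show ?thesis using F0 H0 by (simp add: indicator_def)
  next
    case True
    have Awe: "Aw \<alpha> \<gamma> D t u a z = pw (Wf \<alpha> t a u z) \<gamma> * fA \<alpha> \<gamma> D u a z"
      unfolding Aw_def using True aa by simp
    show ?thesis
    proof (cases "m \<le> a")
      case True
      have "Wf \<alpha> t a u z \<le> K0 \<alpha>"
      proof (cases "r powr \<alpha> \<le> a")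
        case True
        have "r \<le> a powr (1/\<alpha>)" using powr_mono2[OF _ _ True, of "1/\<alpha>"] a0 rr by simp
        then have "r / a powr (1/\<alpha>) \<le> 1" using aa by simp
        moreover have "0 \<le> (2::real) powr (1/\<alpha>)" by simp
        ultimately have "1 + r / a powr (1/\<alpha>) \<le> K0 \<alpha>" unfolding K0_def by linarith
        then show ?thesis unfolding Wf_def r_def by simp
      next
        case False
        then have "t/2 \<le> a" using \<open>m \<le> a\<close> mdef r_def by auto
        then have "(t/a) powr (1/\<alpha>) \<le> 2 powr (1/\<alpha>)" using aa a0 by (intro powr_mono2) (auto simp: field_simps)
        then have "(t/a) powr (1/\<alpha>) \<le> K0 \<alpha>" unfolding K0_def by simp
        then show ?thesis unfolding Wf_def by simp
      qed
      then have "pw (Wf \<alpha> t a u z) \<gamma> \<le> pw (K0 \<alpha>) \<gamma>" using W0 g0 by (intro pw_mono)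
      then have "Aw \<alpha> \<gamma> D t u a z \<le> ?F" unfolding Awe using fA0 by (intro mult_right_mono)
      then show ?thesis using H0 by (simp add: indicator_def)
    next
      case False
      then have am: "a < m" by simp
      have WK: "Wf \<alpha> t a u z \<le> K0 \<alpha> * (m/a) powr (1/\<alpha>)"
      proof (cases "r powr \<alpha> \<le> t/2")
        case True
        then have mr: "m = r powr \<alpha>" using mdef r_def by simp
        have e: "(m/a) powr (1/\<alpha>) = r / a powr (1/\<alpha>)" unfolding mr using aa r0'
          by (simp add: powr_divide rr)
        have "a powr (1/\<alpha>) \<le> r" using powr_mono2[of "1/\<alpha>" a "r powr \<alpha>"] am mr a0 aa rr by simp
        then have "1 \<le> r / a powr (1/\<alpha>)" using aa by simp
        then have "1 + r / a powr (1/\<alpha>) \<le> K0 \<alpha> * (m/a) powr (1/\<alpha>)" unfolding e K0_def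
          by (intro aux_K) auto
        then show ?thesis unfolding Wf_def r_def by simp
      next
        case False
        then have mt: "m = t/2" using mdef r_def by simp
        have "(t/a) powr (1/\<alpha>) = 2 powr (1/\<alpha>) * (m/a) powr (1/\<alpha>)"
          unfolding mt using aa t0 by (simp add: powr_mult[symmetric])
        also have "\<dots> \<le> K0 \<alpha> * (m/a) powr (1/\<alpha>)" unfolding K0_def by (intro mult_right_mono) auto
        finally show ?thesis unfolding Wf_def by simp
      qed
      have pW: "pw (Wf \<alpha> t a u z) \<gamma> \<le> pw (K0 \<alpha>) \<gamma> * (m/a) powr (\<gamma>/\<alpha>)"
      proof -
        have "pw (Wf \<alpha> t a u z) \<gamma> \<le> pw (K0 \<alpha> * (m/a) powr (1/\<alpha>)) \<gamma>" using WK W0 g0 by (intro pw_mono)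
        also have "\<dots> = pw (K0 \<alpha>) \<gamma> * pw ((m/a) powr (1/\<alpha>)) \<gamma>" using K01 by (intro pw_mult) auto
        also have "pw ((m/a) powr (1/\<alpha>)) \<gamma> = (m/a) powr (\<gamma>/\<alpha>)" using m0 aa by (simp add: pw_pos powr_powr)
        finally show ?thesis .
      qed
      have pb: "pw (bfac \<alpha> D a z) \<gamma> \<le> (2*m/a) powr (\<gamma>/\<alpha>) * pw (bfac \<alpha> D (2*m) z) \<gamma>"
      proof -
        have "pw (bfac \<alpha> D a z) \<gamma> \<le> pw ((2*m/a) powr (1/\<alpha>) * bfac \<alpha> D (2*m) z) \<gamma>"
          using aa am g0 by (intro pw_mono bfac_scale bfac_nonneg a0) auto
        also have "\<dots> = pw ((2*m/a) powr (1/\<alpha>)) \<gamma> * pw (bfac \<alpha> D (2*m) z) \<gamma>"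
          using m0 by (intro pw_mult bfac_nonneg a0) auto
        also have "pw ((2*m/a) powr (1/\<alpha>)) \<gamma> = (2*m/a) powr (\<gamma>/\<alpha>)" using m0 aa by (simp add: pw_pos powr_powr)
        finally show ?thesis .
      qed
      have uz: "u \<noteq> z" using r0 by auto
      have qb: "q \<alpha> a u z \<le> a / r powr (real DIM('a) + \<alpha>)" unfolding r_def using uz by (rule q_le_far)
      have "Aw \<alpha> \<gamma> D t u a z \<le> (pw (K0 \<alpha>) \<gamma> * (m/a) powr (\<gamma>/\<alpha>)) *
           ((2*m/a) powr (\<gamma>/\<alpha>) * pw (bfac \<alpha> D (2*m) z) \<gamma> * (a / r powr (real DIM('a) + \<alpha>)))"
        unfolding Awe fA_def using pW pb qb q_pos[OF aa(1), of \<alpha> u z]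
        by (intro mult_mono) (auto simp: pw_nonneg)
      also have "\<dots> = pw (K0 \<alpha>) \<gamma> * pw (bfac \<alpha> D (2*m) z) \<gamma> / r powr (real DIM('a) + \<alpha>) *
          ((m/a) powr (\<gamma>/\<alpha>) * (2*m/a) powr (\<gamma>/\<alpha>) * a)" by (simp only: divide_inverse mult_ac)
      also have "\<dots> = ?H" unfolding powr_ident[OF m0 aa(1)] r_def by (simp only: divide_inverse mult_ac)
      finally show ?thesis using F0 am aa by (simp add: indicator_def)
    qed
  qed
qed


lemma q_lower:
  fixes u z :: "'a::euclidean_space"
  assumes a0: "0 < \<alpha>" and uz: "u \<noteq> z" and m0: "0 < m" and mr: "m \<le> dist u z powr \<alpha>"
    and am: "m \<le> a" "a \<le> 2*m"
  shows "2 powr (- real DIM('a) / \<alpha>) * m / dist u z powr (real DIM('a) + \<alpha>) \<le> q \<alpha> a u z"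
proof -
  define d where "d = real DIM('a)"
  define r where "r = dist u z"
  define \<beta> where "\<beta> = d + \<alpha>"
  have r0: "0 < r" using uz by (simp add: r_def)
  have d0: "0 \<le> d" by (simp add: d_def)
  have c1: "2 powr (- d / \<alpha>) \<le> 1" using powr_mono[of "- d / \<alpha>" 0 2] a0 d0 by (simp add: divide_nonneg_pos)
  have rb0: "0 < r powr \<beta>" using r0 by simp
  have i: "2 powr (- d / \<alpha>) * m / r powr \<beta> \<le> a / r powr \<beta>"
  proof -
    have "2 powr (- d / \<alpha>) * m \<le> 1 * a" using c1 m0 am by (intro mult_mono) auto
    then show ?thesis using rb0 by (simp add: divide_right_mono)
  qed
  have ii: "2 powr (- d / \<alpha>) * m / r powr \<beta> \<le> a powr (- d / \<alpha>)"
  proof -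
    have "r powr \<beta> = (r powr \<alpha>) powr (\<beta>/\<alpha>)" using a0 r0 by (simp add: powr_powr)
    also have "\<dots> \<ge> m powr (\<beta>/\<alpha>)" using mr m0 a0 d0 unfolding r_def \<beta>_def
      by (intro powr_mono2) (auto simp: r_def)
    finally have 1: "m powr (\<beta>/\<alpha>) \<le> r powr \<beta>" .
    have "m / r powr \<beta> \<le> m / m powr (\<beta>/\<alpha>)" using 1 m0 rb0 by (intro divide_left_mono) auto
    also have "\<dots> = m powr (- d / \<alpha>)"
    proof -
      have "\<beta>/\<alpha> = 1 + d/\<alpha>" unfolding \<beta>_def using a0 by (simp add: field_simps)
      then have "m powr (\<beta>/\<alpha>) = m * m powr (d/\<alpha>)" using m0 by (simp add: powr_add)
      then show ?thesis using m0 by (simp add: powr_minus_divide)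
    qed
    finally have 2: "m / r powr \<beta> \<le> m powr (- d / \<alpha>)" .
    have "2 powr (- d / \<alpha>) * m / r powr \<beta> = 2 powr (- d / \<alpha>) * (m / r powr \<beta>)" by simp
    also have "\<dots> \<le> 2 powr (- d / \<alpha>) * m powr (- d / \<alpha>)" using 2 by (intro mult_left_mono) auto
    also have "\<dots> = (2*m) powr (- d / \<alpha>)" using m0 by (simp add: powr_mult)
    also have "\<dots> \<le> a powr (- d / \<alpha>)" using am m0 a0 d0 by (intro powr_mono2') (auto simp: divide_nonneg_pos)
    finally show ?thesis .
  qed
  show ?thesis using i ii uz unfolding d_def r_def \<beta>_def by (simp add: q_neq)
qed


lemma fA_meas_a[measurable]: "(\<lambda>a. fA \<alpha> \<gamma> D u a z) \<in> borel_measurable borel"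
  unfolding fA_def pw_def bfac_def q_def by measurable
lemma Aw_meas_a[measurable]: "(\<lambda>a. Aw \<alpha> \<gamma> D t u a z) \<in> borel_measurable borel"
  unfolding Aw_def Wf_def fA_def pw_def bfac_def q_def by measurable

definition KT :: "real \<Rightarrow> real \<Rightarrow> nat \<Rightarrow> real" where
  "KT \<alpha> \<gamma> n = pw (K0 \<alpha>) \<gamma> + pw (K0 \<alpha>) \<gamma> * 2 powr (\<gamma>/\<alpha>) * 2 powr (real n / \<alpha>) / (2 - 2*(\<gamma>/\<alpha>))"

lemma ind_enn: "indicator A a * ennreal f = ennreal (indicator A a * f)"
  by (simp add: indicator_def)

lemma alg_ident:
  fixes P E2 pb me M2 m R A B c c' :: real
  assumes "me * M2 = m * m" "A * B = 1" "R \<noteq> 0" "c \<noteq> 0" "c' = c"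
  shows "P * E2 * pb * me / R * (M2 / c) = P * E2 * A / c' * (pb * B * m / R * m)"
proof -
  have "P * E2 * pb * me / R * (M2 / c) = P * E2 * pb * (me * M2) / (R * c)" by simp
  also have "\<dots> = P * E2 * pb * (m * m) * (A * B) / (R * c)" using assms by simp
  also have "\<dots> = P * E2 * A / c' * (pb * B * m / R * m)" using assms by (simp add: field_simps)
  finally show ?thesis .
qed

lemma lemT:
  fixes u z :: "'a::euclidean_space"
  assumes a0: "0 < \<alpha>" and g0: "0 \<le> \<gamma>" and ga: "\<gamma> < \<alpha>" and t0: "0 < t"
  shows "(\<integral>\<^sup>+a. indicator {0<..<t} a * ennreal (Aw \<alpha> \<gamma> D t u a z) \<partial>lborel)
     \<le> ennreal (KT \<alpha> \<gamma> DIM('a)) * (\<integral>\<^sup>+a. indicator {0<..<t} a * ennreal (fA \<alpha> \<gamma> D u a z) \<partial>lborel)"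
proof -
  define If where "If = (\<integral>\<^sup>+a. indicator {0<..<t} a * ennreal (fA \<alpha> \<gamma> D u a z) \<partial>lborel)"
  define P where "P = pw (K0 \<alpha>) \<gamma>"
  define e where "e = \<gamma>/\<alpha>"
  define d where "d = real DIM('a)"
  have e01: "0 \<le> e" "e < 1" using a0 g0 ga by (auto simp: e_def)
  have P1: "1 \<le> P" unfolding P_def K0_def using g0 by (intro pw_ge1) auto
  define K' where "K' = P * 2 powr e * 2 powr (d/\<alpha>) / (2 - 2*e)"
  have K'0: "0 \<le> K'" unfolding K'_def using P1 e01 by auto
  have KT: "KT \<alpha> \<gamma> DIM('a) = P + K'" unfolding KT_def K'_def P_def e_def d_def ..
  show ?thesis
  proof (cases "dist u z = 0")
    case True
    have "(\<integral>\<^sup>+a. indicator {0<..<t} a * ennreal (Aw \<alpha> \<gamma> D t u a z) \<partial>lborel)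
        \<le> (\<integral>\<^sup>+a. ennreal P * (indicator {0<..<t} a * ennreal (fA \<alpha> \<gamma> D u a z)) \<partial>lborel)"
    proof (intro nn_integral_mono)
      fix a
      show "indicator {0<..<t} a * ennreal (Aw \<alpha> \<gamma> D t u a z)
          \<le> ennreal P * (indicator {0<..<t} a * ennreal (fA \<alpha> \<gamma> D u a z))"
      proof (cases "a \<in> {0<..<t}")
        case True
        have W1: "Wf \<alpha> t a u z \<le> 1" unfolding Wf_def using \<open>dist u z = 0\<close> by simp
        have W0: "0 \<le> Wf \<alpha> t a u z" unfolding Wf_def using True t0 by auto
        have "pw (Wf \<alpha> t a u z) \<gamma> \<le> 1" using W0 W1 g0 by (rule pw_le1)
        moreover have fa0: "0 \<le> fA \<alpha> \<gamma> D u a z" using True by (intro fA_nonneg) auto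
        ultimately have "pw (Wf \<alpha> t a u z) \<gamma> * fA \<alpha> \<gamma> D u a z \<le> P * fA \<alpha> \<gamma> D u a z"
          using P1 by (intro mult_right_mono) auto
        then have "Aw \<alpha> \<gamma> D t u a z \<le> P * fA \<alpha> \<gamma> D u a z"
          unfolding Aw_def using P1 fa0 by (auto simp: indicator_def)
        then have "ennreal (Aw \<alpha> \<gamma> D t u a z) \<le> ennreal (P * fA \<alpha> \<gamma> D u a z)"
          by (rule ennreal_leI)
        also have "\<dots> = ennreal P * ennreal (fA \<alpha> \<gamma> D u a z)" using P1 fa0 by (simp add: ennreal_mult)
        finally have "ennreal (Aw \<alpha> \<gamma> D t u a z) \<le> ennreal P * ennreal (fA \<alpha> \<gamma> D u a z)" .
        then show ?thesis using True by simp
      qed simp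
    qed
    also have "\<dots> = ennreal P * If" unfolding If_def by (rule nn_integral_cmult) measurable
    also have "\<dots> \<le> ennreal (KT \<alpha> \<gamma> DIM('a)) * If" unfolding KT using K'0
      by (intro mult_right_mono ennreal_leI) auto
    finally show ?thesis unfolding If_def .
  next
    case False
    define r where "r = dist u z"
    have r0: "0 < r" using False by (simp add: r_def)
    define m where "m = min (r powr \<alpha>) (t/2)"
    have m0: "0 < m" using r0 t0 by (simp add: m_def)
    have m2: "2*m \<le> t" "m \<le> r powr \<alpha>" by (auto simp: m_def)
    define pb where "pb = pw (bfac \<alpha> D (2*m) z) \<gamma>"
    have pb0: "0 \<le> pb" unfolding pb_def by (rule pw_nonneg)
    define H where "H = P * 2 powr e * pb * m powr (2*e) / r powr (d + \<alpha>)"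
    have H0: "0 \<le> H" unfolding H_def using P1 pb0 by simp
    have main: "(\<integral>\<^sup>+a. indicator {0<..<t} a * ennreal (Aw \<alpha> \<gamma> D t u a z) \<partial>lborel)
        \<le> (\<integral>\<^sup>+a. ennreal P * (indicator {0<..<t} a * ennreal (fA \<alpha> \<gamma> D u a z))
              + ennreal H * (ennreal (a powr (1 - 2*e)) * indicator {0..m} a) \<partial>lborel)"
    proof (intro nn_integral_mono)
      fix a
      show "indicator {0<..<t} a * ennreal (Aw \<alpha> \<gamma> D t u a z)
          \<le> ennreal P * (indicator {0<..<t} a * ennreal (fA \<alpha> \<gamma> D u a z))
              + ennreal H * (ennreal (a powr (1 - 2*e)) * indicator {0..m} a)"
      proof (cases "a \<in> {0<..<t}")
        case True
        have "Aw \<alpha> \<gamma> D t u a z \<le> P * fA \<alpha> \<gamma> D u a z + indicator {0<..<m} a * (H * a powr (1 - 2*e))"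
          using lemT_pt[OF a0 g0 ga t0 r0[unfolded r_def] m_def[unfolded r_def], where a=a and D=D] True
          unfolding P_def H_def pb_def e_def r_def d_def
          by simp
        also have "\<dots> \<le> P * fA \<alpha> \<gamma> D u a z + H * (a powr (1 - 2*e) * indicator {0..m} a)"
          using H0 by (intro add_left_mono) (auto simp: indicator_def)
        finally have "ennreal (Aw \<alpha> \<gamma> D t u a z) \<le> ennreal (P * fA \<alpha> \<gamma> D u a z + H * (a powr (1 - 2*e) * indicator {0..m} a))"
          by (rule ennreal_leI)
        also have "\<dots> = ennreal P * ennreal (fA \<alpha> \<gamma> D u a z) + ennreal H * (ennreal (a powr (1 - 2*e)) * indicator {0..m} a)"
        proof -
          have fa0: "0 \<le> fA \<alpha> \<gamma> D u a z" using True by (intro fA_nonneg) auto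
          have "0 \<le> P * fA \<alpha> \<gamma> D u a z" using P1 fa0 by simp
          moreover have "0 \<le> H * (a powr (1 - 2*e) * indicator {0..m} a)" using H0 by simp
          ultimately have "ennreal (P * fA \<alpha> \<gamma> D u a z + H * (a powr (1 - 2*e) * indicator {0..m} a))
             = ennreal (P * fA \<alpha> \<gamma> D u a z) + ennreal (H * (a powr (1 - 2*e) * indicator {0..m} a))"
            by (rule ennreal_plus)
          also have "\<dots> = ennreal P * ennreal (fA \<alpha> \<gamma> D u a z) + ennreal H * (ennreal (a powr (1 - 2*e)) * indicator {0..m} a)"
            using P1 fa0 H0 by (simp add: ennreal_mult indicator_def)
          finally show ?thesis .
        qed
        finally show ?thesis using True by simp
      qed simp
    qed
    also have "\<dots> = ennreal P * If + ennreal H * (\<integral>\<^sup>+a. ennreal (a powr (1 - 2*e)) * indicator {0..m} a \<partial>lborel)"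
    proof -
      have 1: "(\<integral>\<^sup>+a. ennreal P * (indicator {0<..<t} a * ennreal (fA \<alpha> \<gamma> D u a z))
              + ennreal H * (ennreal (a powr (1 - 2*e)) * indicator {0..m} a) \<partial>lborel)
         = (\<integral>\<^sup>+a. ennreal P * (indicator {0<..<t} a * ennreal (fA \<alpha> \<gamma> D u a z)) \<partial>lborel)
          + (\<integral>\<^sup>+a. ennreal H * (ennreal (a powr (1 - 2*e)) * indicator {0..m} a) \<partial>lborel)"
        by (rule nn_integral_add) measurable
      have 2: "(\<integral>\<^sup>+a. ennreal P * (indicator {0<..<t} a * ennreal (fA \<alpha> \<gamma> D u a z)) \<partial>lborel) = ennreal P * If"
        unfolding If_def by (rule nn_integral_cmult) measurable
      have 3: "(\<integral>\<^sup>+a. ennreal H * (ennreal (a powr (1 - 2*e)) * indicator {0..m} a) \<partial>lborel)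
          = ennreal H * (\<integral>\<^sup>+a. ennreal (a powr (1 - 2*e)) * indicator {0..m} a \<partial>lborel)"
        by (rule nn_integral_cmult) measurable
      show ?thesis unfolding 1 2 3 ..
    qed
    finally have main: "(\<integral>\<^sup>+a. indicator {0<..<t} a * ennreal (Aw \<alpha> \<gamma> D t u a z) \<partial>lborel)
       \<le> ennreal P * If + ennreal H * (\<integral>\<^sup>+a. ennreal (a powr (1 - 2*e)) * indicator {0..m} a \<partial>lborel)" .
    have pow: "(\<integral>\<^sup>+a. ennreal (a powr (1 - 2*e)) * indicator {0..m} a \<partial>lborel) = ennreal (m powr (1 - 2*e + 1) / (1 - 2*e + 1))"
      using e01 m0 by (intro nn_integral_has_integral_lebesgue' has_integral_powr_from_0) auto
    have Hb: "ennreal H * ennreal (m powr (1 - 2*e + 1) / (1 - 2*e + 1)) \<le> ennreal K' * If"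
    proof -
      define c0 where "c0 = pb * 2 powr (- d / \<alpha>) * m / r powr (d + \<alpha>)"
      have c00: "0 \<le> c0" unfolding c0_def using pb0 m0 by simp
      have uz: "u \<noteq> z" using r0 by (auto simp: r_def)
      have "ennreal (c0 * m) = (\<integral>\<^sup>+a. ennreal c0 * indicator {m..<2*m} a \<partial>lborel)"
        using m0 c00 by (simp add: nn_integral_cmult_indicator ennreal_mult)
      also have "\<dots> \<le> If" unfolding If_def
      proof (intro nn_integral_mono)
        fix a
        show "ennreal c0 * indicator {m..<2*m} a \<le> indicator {0<..<t} a * ennreal (fA \<alpha> \<gamma> D u a z)"
        proof (cases "a \<in> {m..<2*m}")
          case True
          then have a1: "0 < a" "a < t" "m \<le> a" "a \<le> 2*m" using m0 m2 by auto
          have "pb \<le> pw (bfac \<alpha> D a z) \<gamma>" unfolding pb_def using a1 g0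
            by (intro pw_mono bfac_anti bfac_nonneg a0) auto
          moreover have "2 powr (- d / \<alpha>) * m / r powr (d + \<alpha>) \<le> q \<alpha> a u z"
            unfolding d_def r_def using a1 m2 m0 uz by (intro q_lower a0) (auto simp: r_def)
          moreover have c0e: "c0 = pb * (2 powr (- d / \<alpha>) * m / r powr (d + \<alpha>))" unfolding c0_def by simp
          ultimately have "c0 \<le> fA \<alpha> \<gamma> D u a z" unfolding fA_def
            by (subst c0e, intro mult_mono) (use pb0 m0 in \<open>auto simp: pw_nonneg\<close>)
          then show ?thesis using True a1 by (simp add: ennreal_leI)
        qed simp
      qed
      finally have low: "ennreal (c0 * m) \<le> If" .
      have "H * (m powr (1 - 2*e + 1) / (1 - 2*e + 1)) = K' * (c0 * m)"
      proof -
        have "m powr (2*e) * m powr (1 - 2*e + 1) = m * m"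
        proof -
          have "m powr (2*e) * m powr (1 - 2*e + 1) = m powr (2*e + (1 - 2*e + 1))" by (rule powr_add[symmetric])
          also have "\<dots> = m powr 2" by simp
          finally show ?thesis using m0 by (simp add: power2_eq_square)
        qed
        moreover have "2 powr (d/\<alpha>) * 2 powr (- d / \<alpha>) = (1::real)"
          by (simp add: powr_add[symmetric])
        ultimately show ?thesis unfolding H_def K'_def c0_def using r0 e01
          by (intro alg_ident) auto
      qed
      then have "ennreal H * ennreal (m powr (1 - 2*e + 1) / (1 - 2*e + 1)) = ennreal K' * ennreal (c0 * m)"
        using H0 K'0 c00 m0 e01 by (simp add: ennreal_mult[symmetric])
      also have "\<dots> \<le> ennreal K' * If" using low by (rule mult_left_mono) auto
      finally show ?thesis .
    qed
    have "(\<integral>\<^sup>+a. indicator {0<..<t} a * ennreal (Aw \<alpha> \<gamma> D t u a z) \<partial>lborel)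
       \<le> ennreal P * If + ennreal H * ennreal (m powr (1 - 2*e + 1) / (1 - 2*e + 1))"
      using main unfolding pow .
    also have "\<dots> \<le> ennreal P * If + ennreal K' * If" using Hb by (rule add_left_mono)
    also have "\<dots> = ennreal (KT \<alpha> \<gamma> DIM('a)) * If" unfolding KT
      using P1 K'0 by (simp add: ennreal_plus distrib_right)
    finally show ?thesis unfolding If_def .
  qed
qed



lemma infdist_meas[measurable]: "(\<lambda>z. infdist z S) \<in> borel_measurable borel"
  by (intro borel_measurable_continuous_onI continuous_intros)
lemma fA2: "(\<lambda>p. fA \<alpha> \<gamma> D u (fst p) (snd p)) \<in> borel_measurable (borel \<Otimes>\<^sub>M (borel :: 'a::euclidean_space measure))"
  unfolding fA_def pw_def bfac_def q_def by measurable
lemma W2: "(\<lambda>p. pw (Wf \<alpha> t (fst p) u (snd p)) \<gamma>) \<in> borel_measurable (borel \<Otimes>\<^sub>M (borel :: 'a::euclidean_space measure))"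
  unfolding pw_def Wf_def by measurable
lemma Aw2: "(\<lambda>p. Aw \<alpha> \<gamma> D t u (fst p) (snd p)) \<in> borel_measurable (borel \<Otimes>\<^sub>M (borel :: 'a::euclidean_space measure))"
proof -
  have "(\<lambda>p. Aw \<alpha> \<gamma> D t u (fst p) (snd p)) = (\<lambda>p. indicator {0<..t/2} (fst p) * pw (Wf \<alpha> t (fst p) u (snd p)) \<gamma> * fA \<alpha> \<gamma> D u (fst p) (snd p))"
    unfolding Aw_def ..
  also have "\<dots> \<in> borel_measurable (borel \<Otimes>\<^sub>M borel)"
    using W2 fA2 by measurable
  finally show ?thesis .
qed
lemma fA_meas[measurable (raw)]: fixes g :: "'b \<Rightarrow> 'a::euclidean_space" and f :: "'b \<Rightarrow> real"
  assumes "f \<in> borel_measurable M" "g \<in> borel_measurable M"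
  shows "(\<lambda>x. fA \<alpha> \<gamma> D u (f x) (g x)) \<in> borel_measurable M"
  using measurable_compose[OF measurable_Pair[OF assms] fA2] by simp
lemma Aw_meas[measurable (raw)]: fixes g :: "'b \<Rightarrow> 'a::euclidean_space" and f :: "'b \<Rightarrow> real"
  assumes "f \<in> borel_measurable M" "g \<in> borel_measurable M"
  shows "(\<lambda>x. Aw \<alpha> \<gamma> D t u (f x) (g x)) \<in> borel_measurable M"
  using measurable_compose[OF measurable_Pair[OF assms] Aw2] by simp

lemma refl_int:
  fixes g :: "real \<Rightarrow> ennreal"
  assumes [measurable]: "g \<in> borel_measurable borel"
  shows "(\<integral>\<^sup>+s. indicator {0<..<t} s * g (t - s) \<partial>lborel) = (\<integral>\<^sup>+s. indicator {0<..<t} s * g s \<partial>lborel)"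
proof -
  have "(\<integral>\<^sup>+s. indicator {0<..<t} s * g s \<partial>lborel)
      = ennreal \<bar>-1\<bar> * (\<integral>\<^sup>+s. indicator {0<..<t} (t + -1 * s) * g (t + -1 * s) \<partial>lborel)"
    by (rule nn_integral_real_affine) auto
  also have "\<dots> = (\<integral>\<^sup>+s. indicator {0<..<t} (t + -1 * s) * g (t + -1 * s) \<partial>lborel)" by simp
  also have "\<dots> = (\<integral>\<^sup>+s. indicator {0<..<t} s * g (t - s) \<partial>lborel)"
    by (intro nn_integral_cong) (auto simp: indicator_def)
  finally show ?thesis ..
qed

lemma dens_eq:
  fixes h :: "'a::euclidean_space \<Rightarrow> ennreal"
  assumes sM: "sets M = sets borel" and P: "P \<in> sets borel" and h: "h \<in> borel_measurable borel"
    and van: "\<And>z. z \<notin> P \<Longrightarrow> h z = 0"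
  shows "(\<integral>\<^sup>+z. h z \<partial>density M (indicator P)) = (\<integral>\<^sup>+z. h z \<partial>M)"
proof -
  have hM: "h \<in> borel_measurable M" using h measurable_cong_sets[OF sM refl] by blast
  have iM: "indicator P \<in> borel_measurable M" using P sM by (simp add: borel_measurable_indicator)
  have "(\<integral>\<^sup>+z. h z \<partial>density M (indicator P)) = (\<integral>\<^sup>+z. indicator P z * h z \<partial>M)"
    using iM hM by (rule nn_integral_density)
  also have "\<dots> = (\<integral>\<^sup>+z. h z \<partial>M)"
    by (intro nn_integral_cong) (auto simp: indicator_def van)
  finally show ?thesis .
qed

lemma sigma_fin_density:
  fixes g :: "'a::euclidean_space \<Rightarrow> real"
  assumes sM: "sets M = sets borel" and P[measurable]: "P \<in> sets borel" and g[measurable]: "g \<in> borel_measurable borel"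
    and gpos: "\<And>z. z \<in> P \<Longrightarrow> 0 < g z"
    and fin: "(\<integral>\<^sup>+z. indicator P z * ennreal (g z) \<partial>M) < \<infinity>"
  shows "sigma_finite_measure (density M (indicator P))"
proof -
  define Pn where "Pn n = {z \<in> P. 1 / real (Suc n) \<le> g z}" for n
  have Pn_sets: "Pn n \<in> sets borel" for n unfolding Pn_def by measurable
  define A where "A = insert (-P) (range Pn)"
  have sD: "sets (density M (indicator P)) = sets borel" using sM by simp
  have spD: "space (density M (indicator P)) = UNIV" using sets_eq_imp_space_eq[OF sD] by simp
  have iM: "indicator P \<in> borel_measurable M" using P sM by (simp add: borel_measurable_indicator)
  show ?thesis
  proof (unfold_locales, intro exI[of _ A] conjI)
    show "countable A" unfolding A_def by simp
    show "A \<subseteq> sets (density M (indicator P))" unfolding A_def sD using Pn_sets by auto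
    have cover: "z \<in> \<Union>A" for z
    proof (cases "z \<in> P")
      case True
      then have "0 < g z" by (rule gpos)
      then obtain n where "inverse (real (Suc n)) < g z" using reals_Archimedean by blast
      then have "z \<in> Pn n" using True unfolding Pn_def by (simp add: inverse_eq_divide)
      then show ?thesis unfolding A_def by auto
    qed (auto simp: A_def)
    show "\<Union> A = space (density M (indicator P))" unfolding spD using cover by auto
    show "\<forall>a\<in>A. emeasure (density M (indicator P)) a \<noteq> \<infinity>"
    proof
      fix a assume "a \<in> A"
      then consider "a = -P" | n where "a = Pn n" unfolding A_def by auto
      then show "emeasure (density M (indicator P)) a \<noteq> \<infinity>"
      proof cases
        case 1
        have "emeasure (density M (indicator P)) a = (\<integral>\<^sup>+z. indicator P z * indicator a z \<partial>M)"
          using iM 1 sM by (intro emeasure_density) auto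
        also have "\<dots> = (\<integral>\<^sup>+z. 0 \<partial>M)" unfolding 1 by (intro nn_integral_cong) (simp add: indicator_def)
        also have "\<dots> = 0" by simp
        finally show ?thesis by simp
      next
        case 2
        have "emeasure (density M (indicator P)) a = (\<integral>\<^sup>+z. indicator P z * indicator a z \<partial>M)"
          using iM 2 sM Pn_sets by (intro emeasure_density) auto
        also have "\<dots> \<le> (\<integral>\<^sup>+z. ennreal (real (Suc n)) * (indicator P z * ennreal (g z)) \<partial>M)"
        proof (intro nn_integral_mono)
          fix z
          show "indicator P z * indicator a z \<le> ennreal (real (Suc n)) * (indicator P z * ennreal (g z))"
          proof (cases "z \<in> a")
            case True
            then have zP: "z \<in> P" and gz: "1 / real (Suc n) \<le> g z" unfolding 2 Pn_def by auto
            then have "1 \<le> real (Suc n) * g z" by (simp add: field_simps)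
            then have "ennreal 1 \<le> ennreal (real (Suc n) * g z)" by (rule ennreal_leI)
            then show ?thesis using True zP gpos[OF zP] by (simp add: ennreal_mult)
          qed simp
        qed
        also have "\<dots> = ennreal (real (Suc n)) * (\<integral>\<^sup>+z. indicator P z * ennreal (g z) \<partial>M)"
          by (rule nn_integral_cmult) (use sM in \<open>simp add: measurable_cong_sets[OF sM refl]\<close>)
        also have "\<dots> < \<infinity>" using fin by (simp add: ennreal_mult_less_top)
        finally show ?thesis by simp
      qed
    qed
  qed
qed


lemma fub_step:
  fixes u :: "'a::euclidean_space"
  assumes sf: "sigma_finite_measure N" and sN: "sets N = sets borel" and D[measurable]: "D \<in> sets borel"
    and a0: "0 < \<alpha>" and g0: "0 \<le> \<gamma>" and ga: "\<gamma> < \<alpha>" and t0: "0 < t"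
  shows "(\<integral>\<^sup>+a. indicator {0<..<t} a * (\<integral>\<^sup>+z. indicator D z * ennreal (Aw \<alpha> \<gamma> D t u a z) \<partial>N) \<partial>lborel)
    \<le> ennreal (KT \<alpha> \<gamma> DIM('a)) * (\<integral>\<^sup>+a. indicator {0<..<t} a * (\<integral>\<^sup>+z. indicator D z * ennreal (fA \<alpha> \<gamma> D u a z) \<partial>N) \<partial>lborel)"
proof -
  interpret N: sigma_finite_measure N by (rule sf)
  interpret P: pair_sigma_finite lborel N
    by (intro pair_sigma_finite.intro lborel.sigma_finite_measure_axioms sf)
  note sN[measurable_cong]
  define F where "F a z = indicator {0<..<t} a * (indicator D z * ennreal (Aw \<alpha> \<gamma> D t u a z))" for a z
  define G where "G a z = indicator {0<..<t} a * (indicator D z * ennreal (fA \<alpha> \<gamma> D u a z))" for a z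
  have mF: "case_prod F \<in> borel_measurable (lborel \<Otimes>\<^sub>M N)"
    unfolding F_def by measurable
  have mG: "case_prod G \<in> borel_measurable (lborel \<Otimes>\<^sub>M N)"
    unfolding G_def by measurable
  have "(\<integral>\<^sup>+a. indicator {0<..<t} a * (\<integral>\<^sup>+z. indicator D z * ennreal (Aw \<alpha> \<gamma> D t u a z) \<partial>N) \<partial>lborel)
      = (\<integral>\<^sup>+a. (\<integral>\<^sup>+z. F a z \<partial>N) \<partial>lborel)"
    unfolding F_def by (intro nn_integral_cong, rule nn_integral_cmult[symmetric])
      measurable
  also have "\<dots> = (\<integral>\<^sup>+z. (\<integral>\<^sup>+a. F a z \<partial>lborel) \<partial>N)" by (rule P.Fubini'[OF mF, symmetric])
  also have "\<dots> \<le> (\<integral>\<^sup>+z. ennreal (KT \<alpha> \<gamma> DIM('a)) * (\<integral>\<^sup>+a. G a z \<partial>lborel) \<partial>N)"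
  proof (intro nn_integral_mono)
    fix z
    have "(\<integral>\<^sup>+a. F a z \<partial>lborel) = indicator D z * (\<integral>\<^sup>+a. indicator {0<..<t} a * ennreal (Aw \<alpha> \<gamma> D t u a z) \<partial>lborel)"
      unfolding F_def by (subst nn_integral_cmult[symmetric]) (auto intro!: nn_integral_cong simp: mult_ac)
    also have "\<dots> \<le> indicator D z * (ennreal (KT \<alpha> \<gamma> DIM('a)) * (\<integral>\<^sup>+a. indicator {0<..<t} a * ennreal (fA \<alpha> \<gamma> D u a z) \<partial>lborel))"
      by (intro mult_left_mono lemT a0 g0 ga t0) auto
    also have "\<dots> = ennreal (KT \<alpha> \<gamma> DIM('a)) * (\<integral>\<^sup>+a. G a z \<partial>lborel)"
    proof -
      have "(\<integral>\<^sup>+a. G a z \<partial>lborel) = indicator D z * (\<integral>\<^sup>+a. indicator {0<..<t} a * ennreal (fA \<alpha> \<gamma> D u a z) \<partial>lborel)"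
        unfolding G_def by (subst nn_integral_cmult[symmetric]) (auto intro!: nn_integral_cong simp: mult_ac)
      then show ?thesis by (simp add: mult_ac)
    qed
    finally show "(\<integral>\<^sup>+a. F a z \<partial>lborel) \<le> ennreal (KT \<alpha> \<gamma> DIM('a)) * (\<integral>\<^sup>+a. G a z \<partial>lborel)" .
  qed
  also have "\<dots> = ennreal (KT \<alpha> \<gamma> DIM('a)) * (\<integral>\<^sup>+z. (\<integral>\<^sup>+a. G a z \<partial>lborel) \<partial>N)"
    by (rule nn_integral_cmult) (use mG in measurable)
  also have "(\<integral>\<^sup>+z. (\<integral>\<^sup>+a. G a z \<partial>lborel) \<partial>N) = (\<integral>\<^sup>+a. (\<integral>\<^sup>+z. G a z \<partial>N) \<partial>lborel)"
    by (rule P.Fubini'[OF mG])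
  also have "\<dots> = (\<integral>\<^sup>+a. indicator {0<..<t} a * (\<integral>\<^sup>+z. indicator D z * ennreal (fA \<alpha> \<gamma> D u a z) \<partial>N) \<partial>lborel)"
    unfolding G_def by (intro nn_integral_cong, rule nn_integral_cmult)
      measurable
  finally show ?thesis .
qed





definition Rint :: "real \<Rightarrow> real \<Rightarrow> 'a::euclidean_space set \<Rightarrow> real \<Rightarrow> 'a measure \<Rightarrow> 'a \<Rightarrow> ennreal" where
  "Rint \<alpha> \<gamma> D t N u = (\<integral>\<^sup>+s. indicator {0<..<t} s * (\<integral>\<^sup>+z. indicator D z * ennreal (fA \<alpha> \<gamma> D u s z) \<partial>N) \<partial>lborel)"

lemma LHS_meas[measurable (raw)]:
  fixes g :: "'b \<Rightarrow> 'a::euclidean_space" and f :: "'b \<Rightarrow> real"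
  assumes [measurable]: "f \<in> borel_measurable M" "g \<in> borel_measurable M"
  shows "(\<lambda>w. psi \<alpha> \<gamma> D (t - f w) x (g w) * psi \<alpha> \<gamma> D (f w) (g w) y * q \<alpha> (t - f w) x (g w) * q \<alpha> (f w) (g w) y) \<in> borel_measurable M"
  unfolding psi_def pw_def bfac_def q_def by measurable

lemma nn_int_add4:
  fixes f1 f2 f3 f4 :: "'b \<Rightarrow> ennreal"
  assumes [measurable]: "f1 \<in> borel_measurable M" "f2 \<in> borel_measurable M" "f3 \<in> borel_measurable M" "f4 \<in> borel_measurable M"
  shows "(\<integral>\<^sup>+x. c * (f1 x + f2 x + f3 x + f4 x) \<partial>M) = c * ((\<integral>\<^sup>+x. f1 x \<partial>M) + (\<integral>\<^sup>+x. f2 x \<partial>M) + (\<integral>\<^sup>+x. f3 x \<partial>M) + (\<integral>\<^sup>+x. f4 x \<partial>M))"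
proof -
  have "(\<integral>\<^sup>+x. c * (f1 x + f2 x + f3 x + f4 x) \<partial>M) = c * (\<integral>\<^sup>+x. f1 x + f2 x + f3 x + f4 x \<partial>M)"
    by (rule nn_integral_cmult) measurable
  also have "(\<integral>\<^sup>+x. f1 x + f2 x + f3 x + f4 x \<partial>M) = (\<integral>\<^sup>+x. f1 x + f2 x + f3 x \<partial>M) + (\<integral>\<^sup>+x. f4 x \<partial>M)"
    by (rule nn_integral_add) measurable
  also have "(\<integral>\<^sup>+x. f1 x + f2 x + f3 x \<partial>M) = (\<integral>\<^sup>+x. f1 x + f2 x \<partial>M) + (\<integral>\<^sup>+x. f3 x \<partial>M)"
    by (rule nn_integral_add) measurable
  also have "(\<integral>\<^sup>+x. f1 x + f2 x \<partial>M) = (\<integral>\<^sup>+x. f1 x \<partial>M) + (\<integral>\<^sup>+x. f2 x \<partial>M)"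
    by (rule nn_integral_add) measurable
  finally show ?thesis .
qed

lemma main_sf:
  fixes x y :: "'a::euclidean_space"
  assumes sf: "sigma_finite_measure N" and sN: "sets N = sets borel" and D[measurable]: "D \<in> sets borel"
    and a0: "0 < \<alpha>" and g0: "0 \<le> \<gamma>" and ga: "\<gamma> < \<alpha>" and t0: "0 < t"
  shows "(\<integral>\<^sup>+s. indicator {0<..<t} s * (\<integral>\<^sup>+z. indicator D z * ennreal (psi \<alpha> \<gamma> D (t - s) x z * psi \<alpha> \<gamma> D s z y
                    * q \<alpha> (t - s) x z * q \<alpha> s z y) \<partial>N) \<partial>lborel)
    \<le> ennreal (KA \<alpha> \<gamma> DIM('a) * (psi \<alpha> \<gamma> D t x y * q \<alpha> t x y)) *
       (ennreal (KT \<alpha> \<gamma> DIM('a)) * Rint \<alpha> \<gamma> D t N x + Rint \<alpha> \<gamma> D t N y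
        + ennreal (KT \<alpha> \<gamma> DIM('a)) * Rint \<alpha> \<gamma> D t N y + Rint \<alpha> \<gamma> D t N x)"
proof -
  interpret N: sigma_finite_measure N by (rule sf)
  note sN[measurable_cong]
  define c where "c = KA \<alpha> \<gamma> DIM('a) * (psi \<alpha> \<gamma> D t x y * q \<alpha> t x y)"
  have c0: "0 \<le> c" unfolding c_def KA_def psi_def using q_pos[OF t0, of \<alpha> x y]
    by (intro mult_nonneg_nonneg) (auto simp: pw_nonneg)
  define IA where "IA u a = (\<integral>\<^sup>+z. indicator D z * ennreal (Aw \<alpha> \<gamma> D t u a z) \<partial>N)" for u a
  define IF where "IF u a = (\<integral>\<^sup>+z. indicator D z * ennreal (fA \<alpha> \<gamma> D u a z) \<partial>N)" for u a
  have mIA[measurable]: "(\<lambda>a. IA u (h a)) \<in> borel_measurable borel" if [measurable]: "h \<in> borel_measurable borel" for u h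
    unfolding IA_def by measurable
  have mIF[measurable]: "(\<lambda>a. IF u (h a)) \<in> borel_measurable borel" if [measurable]: "h \<in> borel_measurable borel" for u h
    unfolding IF_def by measurable
  have "(\<integral>\<^sup>+s. indicator {0<..<t} s * (\<integral>\<^sup>+z. indicator D z * ennreal (psi \<alpha> \<gamma> D (t - s) x z * psi \<alpha> \<gamma> D s z y
                    * q \<alpha> (t - s) x z * q \<alpha> s z y) \<partial>N) \<partial>lborel)
     \<le> (\<integral>\<^sup>+s. ennreal c * (indicator {0<..<t} s * IA x (t - s) + indicator {0<..<t} s * IF y s
          + indicator {0<..<t} s * IA y s + indicator {0<..<t} s * IF x (t - s)) \<partial>lborel)"
  proof (intro nn_integral_mono)
    fix s
    show "indicator {0<..<t} s * (\<integral>\<^sup>+z. indicator D z * ennreal (psi \<alpha> \<gamma> D (t - s) x z * psi \<alpha> \<gamma> D s z y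
                    * q \<alpha> (t - s) x z * q \<alpha> s z y) \<partial>N)
       \<le> ennreal c * (indicator {0<..<t} s * IA x (t - s) + indicator {0<..<t} s * IF y s
          + indicator {0<..<t} s * IA y s + indicator {0<..<t} s * IF x (t - s))"
    proof (cases "s \<in> {0<..<t}")
      case True
      then have s: "0 < s" "s < t" by auto
      have "(\<integral>\<^sup>+z. indicator D z * ennreal (psi \<alpha> \<gamma> D (t - s) x z * psi \<alpha> \<gamma> D s z y
                    * q \<alpha> (t - s) x z * q \<alpha> s z y) \<partial>N)
         \<le> (\<integral>\<^sup>+z. ennreal c * (indicator D z * ennreal (Aw \<alpha> \<gamma> D t x (t-s) z) + indicator D z * ennreal (fA \<alpha> \<gamma> D y s z)
              + indicator D z * ennreal (Aw \<alpha> \<gamma> D t y s z) + indicator D z * ennreal (fA \<alpha> \<gamma> D x (t-s) z)) \<partial>N)"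
      proof (intro nn_integral_mono)
        fix z
        have n: "0 \<le> Aw \<alpha> \<gamma> D t x (t-s) z" "0 \<le> fA \<alpha> \<gamma> D y s z" "0 \<le> Aw \<alpha> \<gamma> D t y s z" "0 \<le> fA \<alpha> \<gamma> D x (t-s) z"
          using s by (auto intro!: Aw_nonneg fA_nonneg)
        have "ennreal (psi \<alpha> \<gamma> D (t - s) x z * psi \<alpha> \<gamma> D s z y * q \<alpha> (t - s) x z * q \<alpha> s z y)
           \<le> ennreal (c * (Aw \<alpha> \<gamma> D t x (t-s) z + fA \<alpha> \<gamma> D y s z + Aw \<alpha> \<gamma> D t y s z + fA \<alpha> \<gamma> D x (t-s) z))"
          unfolding c_def using lemPt[OF a0 g0 _ t0 s, of D x z y] ga by (intro ennreal_leI) auto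
        also have "\<dots> = ennreal c * (ennreal (Aw \<alpha> \<gamma> D t x (t-s) z) + ennreal (fA \<alpha> \<gamma> D y s z)
              + ennreal (Aw \<alpha> \<gamma> D t y s z) + ennreal (fA \<alpha> \<gamma> D x (t-s) z))"
        proof -
          have "ennreal (c * (Aw \<alpha> \<gamma> D t x (t-s) z + fA \<alpha> \<gamma> D y s z + Aw \<alpha> \<gamma> D t y s z + fA \<alpha> \<gamma> D x (t-s) z))
            = ennreal c * ennreal (Aw \<alpha> \<gamma> D t x (t-s) z + fA \<alpha> \<gamma> D y s z + Aw \<alpha> \<gamma> D t y s z + fA \<alpha> \<gamma> D x (t-s) z)"
            using c0 n by (intro ennreal_mult) auto
          also have "ennreal (Aw \<alpha> \<gamma> D t x (t-s) z + fA \<alpha> \<gamma> D y s z + Aw \<alpha> \<gamma> D t y s z + fA \<alpha> \<gamma> D x (t-s) z)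
            = ennreal (Aw \<alpha> \<gamma> D t x (t-s) z) + ennreal (fA \<alpha> \<gamma> D y s z)
              + ennreal (Aw \<alpha> \<gamma> D t y s z) + ennreal (fA \<alpha> \<gamma> D x (t-s) z)"
            using n by (simp add: ennreal_plus add_nonneg_nonneg del: ennreal_plus_if)
          finally show ?thesis .
        qed
        finally show "indicator D z * ennreal (psi \<alpha> \<gamma> D (t - s) x z * psi \<alpha> \<gamma> D s z y * q \<alpha> (t - s) x z * q \<alpha> s z y)
          \<le> ennreal c * (indicator D z * ennreal (Aw \<alpha> \<gamma> D t x (t-s) z) + indicator D z * ennreal (fA \<alpha> \<gamma> D y s z)
              + indicator D z * ennreal (Aw \<alpha> \<gamma> D t y s z) + indicator D z * ennreal (fA \<alpha> \<gamma> D x (t-s) z))"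
          by (cases "z \<in> D") auto
      qed
      also have "\<dots> = ennreal c * (IA x (t - s) + IF y s + IA y s + IF x (t - s))"
        unfolding IA_def IF_def by (rule nn_int_add4) measurable
      finally show ?thesis using True by simp
    qed simp
  qed
  also have "\<dots> = ennreal c * ((\<integral>\<^sup>+s. indicator {0<..<t} s * IA x (t - s) \<partial>lborel) + (\<integral>\<^sup>+s. indicator {0<..<t} s * IF y s \<partial>lborel)
          + (\<integral>\<^sup>+s. indicator {0<..<t} s * IA y s \<partial>lborel) + (\<integral>\<^sup>+s. indicator {0<..<t} s * IF x (t - s) \<partial>lborel))"
    by (rule nn_int_add4) measurable
  also have "\<dots> \<le> ennreal c * (ennreal (KT \<alpha> \<gamma> DIM('a)) * Rint \<alpha> \<gamma> D t N x + Rint \<alpha> \<gamma> D t N y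
        + ennreal (KT \<alpha> \<gamma> DIM('a)) * Rint \<alpha> \<gamma> D t N y + Rint \<alpha> \<gamma> D t N x)"
  proof (intro mult_left_mono add_mono)
    have "(\<integral>\<^sup>+s. indicator {0<..<t} s * IA x (t - s) \<partial>lborel) = (\<integral>\<^sup>+s. indicator {0<..<t} s * IA x s \<partial>lborel)"
      by (rule refl_int) measurable
    also have "\<dots> \<le> ennreal (KT \<alpha> \<gamma> DIM('a)) * Rint \<alpha> \<gamma> D t N x"
      unfolding IA_def Rint_def by (rule fub_step[OF sf sN D a0 g0 ga t0])
    finally show "(\<integral>\<^sup>+s. indicator {0<..<t} s * IA x (t - s) \<partial>lborel) \<le> ennreal (KT \<alpha> \<gamma> DIM('a)) * Rint \<alpha> \<gamma> D t N x" .
    show "(\<integral>\<^sup>+s. indicator {0<..<t} s * IF y s \<partial>lborel) \<le> Rint \<alpha> \<gamma> D t N y"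
      unfolding IF_def Rint_def by simp
    show "(\<integral>\<^sup>+s. indicator {0<..<t} s * IA y s \<partial>lborel) \<le> ennreal (KT \<alpha> \<gamma> DIM('a)) * Rint \<alpha> \<gamma> D t N y"
      unfolding IA_def Rint_def by (rule fub_step[OF sf sN D a0 g0 ga t0])
    have "(\<integral>\<^sup>+s. indicator {0<..<t} s * IF x (t - s) \<partial>lborel) = (\<integral>\<^sup>+s. indicator {0<..<t} s * IF x s \<partial>lborel)"
      by (rule refl_int) measurable
    then show "(\<integral>\<^sup>+s. indicator {0<..<t} s * IF x (t - s) \<partial>lborel) \<le> Rint \<alpha> \<gamma> D t N x"
      unfolding IF_def Rint_def by simp
  qed auto
  finally show ?thesis unfolding c_def .
qed




lemma exists_finite:
  fixes G :: "real \<Rightarrow> ennreal"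
  assumes fin: "(\<integral>\<^sup>+s. indicator {0<..<t} s * G s \<partial>lborel) < \<infinity>" and t0: "0 < t"
  shows "\<exists>s\<in>{0<..<t}. G s < \<infinity>"
proof (rule ccontr)
  assume "\<not> (\<exists>s\<in>{0<..<t}. G s < \<infinity>)"
  then have inf: "G s = \<infinity>" if "s \<in> {0<..<t}" for s
  proof -
    have "\<not> G s < \<infinity>" using that \<open>\<not> (\<exists>s\<in>{0<..<t}. G s < \<infinity>)\<close> by blast
    then show ?thesis by (metis infinity_ennreal_def top.not_eq_extremum)
  qed
  have "(\<integral>\<^sup>+s. indicator {0<..<t} s * G s \<partial>lborel) = (\<integral>\<^sup>+s. \<infinity> * indicator {0<..<t} s \<partial>lborel)"
    by (intro nn_integral_cong) (auto simp: indicator_def inf)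
  also have "\<dots> = \<infinity> * emeasure lborel {0<..<t}" by (rule nn_integral_cmult_indicator) simp
  also have "\<dots> = \<infinity>" using t0 by (simp add: ennreal_top_mult)
  finally show False using fin by simp
qed

lemma ennreal_sum_bound:
  fixes S :: ennreal assumes "0 \<le> K"
  shows "ennreal K * S + S + ennreal K * S + S = ennreal (2 + 2 * K) * S"
proof -
  have "ennreal (2 + 2 * K) = ennreal 2 * ennreal (1 + K)" using assms
    by (subst ennreal_mult[symmetric]) (auto simp: algebra_simps)
  also have "ennreal (1 + K) = 1 + ennreal K" using assms by (simp add: ennreal_plus)
  finally have "ennreal (2 + 2 * K) = 2 * (1 + ennreal K)" by simp
  then have 1: "ennreal (2 + 2 * K) * S = 2 * ((1 + ennreal K) * S)" by (simp add: algebra_simps)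
  have "2 * ((1 + ennreal K) * S) = (S + ennreal K * S) + (S + ennreal K * S)"
    by (simp add: mult_2 distrib_right)
  then show ?thesis unfolding 1 by (simp add: add_ac)
qed

lemma pw_bfac_zero:
  assumes "0 < s" "0 < \<alpha>"
  shows "pw (bfac \<alpha> D s z) \<gamma> = 0 \<longleftrightarrow> (\<gamma> \<noteq> 0 \<and> - D \<noteq> {} \<and> infdist z (- D) = 0)"
proof -
  have sp: "0 < s powr (1/\<alpha>)" using assms by simp
  have "bfac \<alpha> D s z = 0 \<longleftrightarrow> (- D \<noteq> {} \<and> infdist z (- D) = 0)"
    unfolding bfac_def using sp infdist_nonneg[of z "-D"] by (auto simp: min_def)
  moreover have "0 \<le> bfac \<alpha> D s z" using assms by (intro bfac_nonneg) auto
  ultimately show ?thesis unfolding pw_def by auto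
qed

theorem theorem2p4:
  fixes \<alpha> \<gamma> :: real
  assumes "0 < \<alpha>" "\<alpha> < 2" "0 \<le> \<gamma>" "\<gamma> < \<alpha>"
  shows "\<exists>C3>0. \<forall>(D::'a::euclidean_space set) (\<mu>::'a measure) t x y.
     D \<in> sets borel \<longrightarrow> sets \<mu> = sets borel \<longrightarrow> 0 < t \<longrightarrow> x \<in> D \<longrightarrow> y \<in> D \<longrightarrow>
     (\<integral>\<^sup>+ s. indicator {0<..<t} s *
        (\<integral>\<^sup>+ z. indicator D z * ennreal (psi \<alpha> \<gamma> D (t - s) x z * psi \<alpha> \<gamma> D s z y
                    * q \<alpha> (t - s) x z * q \<alpha> s z y) \<partial>\<mu>) \<partial>lborel)
     \<le> ennreal (C3 * psi \<alpha> \<gamma> D t x y * q \<alpha> t x y) *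
       (SUP u\<in>D. \<integral>\<^sup>+ s. indicator {0<..<t} s *
          (\<integral>\<^sup>+ z. indicator D z * ennreal (pw (bfac \<alpha> D s z) \<gamma> * q \<alpha> s u z) \<partial>\<mu>) \<partial>lborel)"
proof -
  note a0 = assms(1) and g0 = assms(3) and ga = assms(4)
  define KAc where "KAc = KA \<alpha> \<gamma> DIM('a)"
  define KTc where "KTc = KT \<alpha> \<gamma> DIM('a)"
  define C3 where "C3 = KAc * (2 + 2 * KTc)"
  have E1: "1 \<le> pw (2 powr (1/\<alpha>)) \<gamma>" using a0 g0 by (intro pw_ge1 ge_one_powr_ge_zero) auto
  have KA0: "0 < KAc" unfolding KAc_def KA_def
  proof -
    have "0 < pw (2 powr (1/\<alpha>)) \<gamma> * pw (2 powr (1/\<alpha>)) \<gamma> * (2 powr (real DIM('a) / \<alpha>) + 2 powr (real DIM('a) + \<alpha>))"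
      using E1 by (intro mult_pos_pos add_pos_pos) auto
    moreover have "0 \<le> 2 powr (real DIM('a) + \<alpha>) * pw (2 powr (1/\<alpha>)) \<gamma>" by (simp add: pw_nonneg)
    ultimately show "0 < pw (2 powr (1/\<alpha>)) \<gamma> * pw (2 powr (1/\<alpha>)) \<gamma> * (2 powr (real DIM('a) / \<alpha>) + 2 powr (real DIM('a) + \<alpha>))
      + 2 powr (real DIM('a) + \<alpha>) * pw (2 powr (1/\<alpha>)) \<gamma>" by linarith
  qed
  have KT0: "0 \<le> KTc"
  proof -
    have "\<gamma>/\<alpha> < 1" using a0 ga by simp
    then have "0 \<le> 2 - 2*(\<gamma>/\<alpha>)" by simp
    then show ?thesis unfolding KTc_def KT_def
      by (intro add_nonneg_nonneg mult_nonneg_nonneg divide_nonneg_nonneg) (auto simp: pw_nonneg)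
  qed
  have C30: "0 < C3" unfolding C3_def using KA0 KT0 by simp
  show ?thesis
  proof (intro exI[of _ C3] conjI allI impI C30)
    fix D :: "'a set" and \<mu> :: "'a measure" and t :: real and x y
    assume D[measurable]: "D \<in> sets borel" and s\<mu>: "sets \<mu> = sets borel" and t0: "0 < t" and xD: "x \<in> D" and yD: "y \<in> D"
    show "(\<integral>\<^sup>+ s. indicator {0<..<t} s *
        (\<integral>\<^sup>+ z. indicator D z * ennreal (psi \<alpha> \<gamma> D (t - s) x z * psi \<alpha> \<gamma> D s z y
                    * q \<alpha> (t - s) x z * q \<alpha> s z y) \<partial>\<mu>) \<partial>lborel)
     \<le> ennreal (C3 * psi \<alpha> \<gamma> D t x y * q \<alpha> t x y) *
       (SUP u\<in>D. \<integral>\<^sup>+ s. indicator {0<..<t} s *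
          (\<integral>\<^sup>+ z. indicator D z * ennreal (pw (bfac \<alpha> D s z) \<gamma> * q \<alpha> s u z) \<partial>\<mu>) \<partial>lborel)"
      (is "?L \<le> _ * ?S")
    proof -
      define \<Phi> where "\<Phi> = psi \<alpha> \<gamma> D t x y * q \<alpha> t x y"
      have \<Phi>0: "0 \<le> \<Phi>" unfolding \<Phi>_def psi_def using q_pos[OF t0, of \<alpha> x y] by (simp add: pw_nonneg)
      have Ceq: "C3 * psi \<alpha> \<gamma> D t x y * q \<alpha> t x y = KAc * \<Phi> * (2 + 2 * KTc)"
        unfolding \<Phi>_def C3_def by (simp add: mult_ac)
      have Seq: "?S = (SUP u\<in>D. Rint \<alpha> \<gamma> D t \<mu> u)" unfolding Rint_def fA_def ..
      define LI where "LI s z = psi \<alpha> \<gamma> D (t - s) x z * psi \<alpha> \<gamma> D s z y * q \<alpha> (t - s) x z * q \<alpha> s z y" for s z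
      have pt: "LI s z \<le> KAc * \<Phi> * (Aw \<alpha> \<gamma> D t x (t-s) z + fA \<alpha> \<gamma> D y s z + Aw \<alpha> \<gamma> D t y s z + fA \<alpha> \<gamma> D x (t-s) z)"
        if "0 < s" "s < t" for s z
        unfolding LI_def KAc_def \<Phi>_def using lemPt[OF a0 g0 _ t0 that, of D x z y] ga by simp
      show ?thesis
      proof (cases "\<Phi> = 0")
        case True
        have "?L = (\<integral>\<^sup>+s. 0 \<partial>(lborel::real measure))"
        proof (rule nn_integral_cong)
          fix s :: real
          assume "s \<in> space lborel"
          show "indicator {0<..<t} s * (\<integral>\<^sup>+ z. indicator D z * ennreal (psi \<alpha> \<gamma> D (t - s) x z * psi \<alpha> \<gamma> D s z y
                    * q \<alpha> (t - s) x z * q \<alpha> s z y) \<partial>\<mu>) = 0"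
          proof (cases "s \<in> {0<..<t}")
            case True
            then have "LI s z \<le> 0" for z using pt[of s z] \<open>\<Phi> = 0\<close> by auto
            then have "ennreal (LI s z) = 0" for z by (simp add: ennreal_eq_0_iff)
            then show ?thesis unfolding LI_def[symmetric] by simp
          qed simp
        qed
        then show ?thesis by simp
      next
        case False
        then have \<Phi>pos: "0 < \<Phi>" using \<Phi>0 by simp
        show ?thesis
        proof (cases "?S = \<infinity>")
          case True
          have "0 < C3 * psi \<alpha> \<gamma> D t x y * q \<alpha> t x y" unfolding Ceq using KA0 KT0 \<Phi>pos by simp
          then have "ennreal (C3 * psi \<alpha> \<gamma> D t x y * q \<alpha> t x y) \<noteq> 0" by (metis ennreal_eq_0_iff not_le)
          then have "ennreal (C3 * psi \<alpha> \<gamma> D t x y * q \<alpha> t x y) * top = top" by (rule ennreal_top_mult_left)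
          then have "ennreal (C3 * psi \<alpha> \<gamma> D t x y * q \<alpha> t x y) * ?S = \<infinity>"
            unfolding True by (simp add: infinity_ennreal_def)
          then show ?thesis by simp
        next
          case False
          then have "?S \<noteq> top" by (simp add: infinity_ennreal_def)
          then have Sfin: "?S < \<infinity>" unfolding infinity_ennreal_def by (rule top.not_eq_extremum[THEN iffD1])
          have Rle: "Rint \<alpha> \<gamma> D t \<mu> u \<le> ?S" if "u \<in> D" for u
            unfolding Seq using that by (rule SUP_upper)
          have "Rint \<alpha> \<gamma> D t \<mu> y < \<infinity>" using Rle[OF yD] Sfin by (rule le_less_trans)
          then obtain s0 where s0: "s0 \<in> {0<..<t}"
            and s0fin: "(\<integral>\<^sup>+z. indicator D z * ennreal (fA \<alpha> \<gamma> D y s0 z) \<partial>\<mu>) < \<infinity>"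
          proof -
            have "\<exists>s\<in>{0<..<t}. (\<integral>\<^sup>+z. indicator D z * ennreal (fA \<alpha> \<gamma> D y s z) \<partial>\<mu>) < \<infinity>"
              using \<open>Rint \<alpha> \<gamma> D t \<mu> y < \<infinity>\<close> unfolding Rint_def by (rule exists_finite[OF _ t0])
            then show ?thesis using that by blast
          qed
          define P where "P = {z \<in> D. \<not> (\<gamma> \<noteq> 0 \<and> - D \<noteq> {} \<and> infdist z (- D) = 0)}"
          have P[measurable]: "P \<in> sets borel" unfolding P_def by measurable
          have van: "pw (bfac \<alpha> D s z) \<gamma> = 0" if "0 < s" "z \<in> D" "z \<notin> P" for s z
            using that pw_bfac_zero[OF that(1) a0, of D z \<gamma>] unfolding P_def by auto
          have ppos: "0 < pw (bfac \<alpha> D s z) \<gamma>" if "0 < s" "z \<in> P" for s z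
            using that pw_bfac_zero[OF that(1) a0, of D z \<gamma>] pw_nonneg[of "bfac \<alpha> D s z" \<gamma>]
            unfolding P_def by auto
          define N where "N = density \<mu> (indicator P)"
          have sN: "sets N = sets borel" unfolding N_def using s\<mu> by simp
          have sfN: "sigma_finite_measure N" unfolding N_def
          proof (rule sigma_fin_density[OF s\<mu> P, of "\<lambda>z. fA \<alpha> \<gamma> D y s0 z"])
            show "(\<lambda>z. fA \<alpha> \<gamma> D y s0 z) \<in> borel_measurable borel" by measurable
            show "0 < fA \<alpha> \<gamma> D y s0 z" if "z \<in> P" for z
              unfolding fA_def using ppos[of s0 z] that s0 q_pos[of s0 \<alpha> y z] by auto
            have "(\<integral>\<^sup>+z. indicator P z * ennreal (fA \<alpha> \<gamma> D y s0 z) \<partial>\<mu>)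
                \<le> (\<integral>\<^sup>+z. indicator D z * ennreal (fA \<alpha> \<gamma> D y s0 z) \<partial>\<mu>)"
              by (intro nn_integral_mono) (auto simp: indicator_def P_def)
            then show "(\<integral>\<^sup>+z. indicator P z * ennreal (fA \<alpha> \<gamma> D y s0 z) \<partial>\<mu>) < \<infinity>"
              using s0fin by (rule le_less_trans)
          qed
          have Leq: "?L = (\<integral>\<^sup>+ s. indicator {0<..<t} s *
              (\<integral>\<^sup>+ z. indicator D z * ennreal (psi \<alpha> \<gamma> D (t - s) x z * psi \<alpha> \<gamma> D s z y
                    * q \<alpha> (t - s) x z * q \<alpha> s z y) \<partial>N) \<partial>lborel)"
          proof (rule nn_integral_cong)
            fix s :: real
            assume "s \<in> space lborel"
            show "indicator {0<..<t} s * (\<integral>\<^sup>+ z. indicator D z * ennreal (psi \<alpha> \<gamma> D (t - s) x z * psi \<alpha> \<gamma> D s z y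
                    * q \<alpha> (t - s) x z * q \<alpha> s z y) \<partial>\<mu>) = indicator {0<..<t} s * (\<integral>\<^sup>+ z. indicator D z * ennreal (psi \<alpha> \<gamma> D (t - s) x z * psi \<alpha> \<gamma> D s z y
                    * q \<alpha> (t - s) x z * q \<alpha> s z y) \<partial>N)"
            proof (cases "s \<in> {0<..<t}")
              case True
              have "(\<integral>\<^sup>+ z. indicator D z * ennreal (psi \<alpha> \<gamma> D (t - s) x z * psi \<alpha> \<gamma> D s z y
                    * q \<alpha> (t - s) x z * q \<alpha> s z y) \<partial>N) = (\<integral>\<^sup>+ z. indicator D z * ennreal (psi \<alpha> \<gamma> D (t - s) x z * psi \<alpha> \<gamma> D s z y
                    * q \<alpha> (t - s) x z * q \<alpha> s z y) \<partial>\<mu>)"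
                unfolding N_def
              proof (rule dens_eq[OF s\<mu> P])
                show "(\<lambda>z. indicator D z * ennreal (psi \<alpha> \<gamma> D (t - s) x z * psi \<alpha> \<gamma> D s z y
                    * q \<alpha> (t - s) x z * q \<alpha> s z y)) \<in> borel_measurable borel" by measurable
                fix z assume "z \<notin> P"
                then show "indicator D z * ennreal (psi \<alpha> \<gamma> D (t - s) x z * psi \<alpha> \<gamma> D s z y
                    * q \<alpha> (t - s) x z * q \<alpha> s z y) = 0"
                  using van[of s z] True unfolding psi_def by (cases "z \<in> D") auto
              qed
              then show ?thesis by simp
            qed simp
          qed
          have Req: "Rint \<alpha> \<gamma> D t \<mu> u = Rint \<alpha> \<gamma> D t N u" for u
            unfolding Rint_def
          proof (rule nn_integral_cong)
            fix s :: real
            assume "s \<in> space lborel"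
            show "indicator {0<..<t} s * (\<integral>\<^sup>+z. indicator D z * ennreal (fA \<alpha> \<gamma> D u s z) \<partial>\<mu>)
               = indicator {0<..<t} s * (\<integral>\<^sup>+z. indicator D z * ennreal (fA \<alpha> \<gamma> D u s z) \<partial>N)"
            proof (cases "s \<in> {0<..<t}")
              case True
              have "(\<integral>\<^sup>+z. indicator D z * ennreal (fA \<alpha> \<gamma> D u s z) \<partial>N) = (\<integral>\<^sup>+z. indicator D z * ennreal (fA \<alpha> \<gamma> D u s z) \<partial>\<mu>)"
                unfolding N_def
              proof (rule dens_eq[OF s\<mu> P])
                show "(\<lambda>z. indicator D z * ennreal (fA \<alpha> \<gamma> D u s z)) \<in> borel_measurable borel" by measurable
                fix z assume "z \<notin> P"
                then show "indicator D z * ennreal (fA \<alpha> \<gamma> D u s z) = 0"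
                  using van[of s z] True unfolding fA_def by (cases "z \<in> D") auto
              qed
              then show ?thesis by simp
            qed simp
          qed
          have "?L \<le> ennreal (KAc * \<Phi>) *
             (ennreal KTc * Rint \<alpha> \<gamma> D t N x + Rint \<alpha> \<gamma> D t N y
              + ennreal KTc * Rint \<alpha> \<gamma> D t N y + Rint \<alpha> \<gamma> D t N x)"
            unfolding Leq KAc_def KTc_def \<Phi>_def by (rule main_sf[OF sfN sN D a0 g0 ga t0])
          also have "\<dots> \<le> ennreal (KAc * \<Phi>) * (ennreal KTc * ?S + ?S + ennreal KTc * ?S + ?S)"
            unfolding Req[symmetric] using Rle[OF xD] Rle[OF yD]
            by (intro mult_left_mono add_mono) auto
          also have "\<dots> = ennreal (KAc * \<Phi>) * (ennreal (2 + 2 * KTc) * ?S)"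
            using KT0 by (simp add: ennreal_sum_bound)
          also have "\<dots> = ennreal (C3 * psi \<alpha> \<gamma> D t x y * q \<alpha> t x y) * ?S"
            unfolding Ceq using KA0 \<Phi>0 KT0 by (simp add: ennreal_mult mult.assoc)
          finally show ?thesis .
        qed
      qed
    qed
  qed
qed


end
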